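(* Under the hypotheses and notation of the context, assume moreover that $u$ is analytic in the annulus $q<|z|<1$. Then for every $n\ge2$ with $\phi_k(0)\ne0$ for $1\le k\le n$, $$B_n+B_{n-1}-\frac{\kappa_{n-1}}{\kappa_{n-2}}\frac{A_{n-1}}{z}-\frac{\kappa_n}{\kappa_{n-2}}\frac{\phi_{n-1}(0)}{\phi_n(0)}A_{n-1}=-\frac{n-1}{qz}-\frac{u(qz)}{q}-\frac{1-q}{q}\sum_{j=0}^{n-1}\Big[B_{j+1}-\frac{\kappa_j}{\kappa_{j-1}}\frac{A_j}{z}\Big],$$ where all $A_k,B_k$ are evaluated at $z$ and the $j=0$ summand is interpreted as $B_1(z)+M_1(z)$.
   Context: Let $0<q<1$. Let $w$ be a positive weight on the unit circle normalized by $\int_{|\zeta|=1}w(\zeta)\frac{d\zeta}{i\zeta}=1$ (contour integrals counterclockwise), analytic in $q<|z|<1$ and continuous on its boundary, with orthonormal polynomials $\phi_n(z)=\kappa_nz^n+\cdots$, $\kappa_n>0$, $\int_{|\zeta|=1}\phi_m\overline{\phi_n}w\frac{d\zeta}{i\zeta}=\delta_{m,n}$. For $f(z)=\sum_{k=0}^na_kz^k$ of degree $n$, $f^*(z)=\sum_{k=0}^n\overline{a_k}z^{n-k}$. $(D_qf)(z)=\frac{f(z)-f(qz)}{z-qz}$, and $u$ is defined by $(D_qw)(z)=-u(qz)w(qz)$. For $k\ge1$ with $\phi_k(0)\neq0$, $$A_k(z)=\frac{\kappa_{k-1}}{\kappa_k}\frac{1-q^k}{1-q}+i\frac{\kappa_{k-1}}{\phi_k(0)}z\int_{|\zeta|=1}\frac{u(\zeta)-u(qz)}{\zeta-qz}\phi_k(\zeta)\overline{\phi_k^*(q\zeta)}w(\zeta)\,d\zeta,$$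 $$B_k(z)=-i\int_{|\zeta|=1}\frac{u(\zeta)-u(qz)}{\zeta-qz}\phi_k(\zeta)\Big[\overline{\phi_k(q\zeta)}-\frac{\kappa_k}{\phi_k(0)}\overline{\phi_k^*(q\zeta)}\Big]w(\zeta)\,d\zeta,$$ so that $(D_q\phi_k)(z)=A_k(z)\phi_{k-1}(z)-B_k(z)\phi_k(z)$. Also $M_1(z)=\int_{|\zeta|=1}\zeta\frac{u(\zeta)-u(qz)}{\zeta-qz}w(\zeta)\frac{d\zeta}{i\zeta}$. *)

theory Defs
  imports "HOL-Complex_Analysis.Complex_Analysis" "HOL-Computational_Algebra.Polynomial"
begin

definition pstar :: "complex poly \<Rightarrow> complex \<Rightarrow> complex" where
  "pstar p z = (\<Sum>k\<le>degree p. cnj (coeff p k) * z ^ (degree p - k))"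

definition Dq :: "real \<Rightarrow> (complex \<Rightarrow> complex) \<Rightarrow> complex \<Rightarrow> complex" where
  "Dq q f z = (f z - f (of_real q * z)) / (z - of_real q * z)"

definition annulus :: "real \<Rightarrow> complex set" where
  "annulus q = {z. q < norm z \<and> norm z < 1}"

definition cannulus :: "real \<Rightarrow> complex set" where
  "cannulus q = {z. q \<le> norm z \<and> norm z \<le> 1}"

definition kap :: "(nat \<Rightarrow> complex poly) \<Rightarrow> nat \<Rightarrow> complex" where
  "kap \<phi> n = lead_coeff (\<phi> n)"

definition coefA ::
  "real \<Rightarrow> (complex \<Rightarrow> complex) \<Rightarrow> (complex \<Rightarrow> complex) \<Rightarrow> (nat \<Rightarrow> complex poly)
    \<Rightarrow> nat \<Rightarrow> complex \<Rightarrow> complex" where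
  "coefA q w u \<phi> k z =
     kap \<phi> (k - 1) / kap \<phi> k * ((1 - of_real q ^ k) / (1 - of_real q))
     + \<i> * kap \<phi> (k - 1) / poly (\<phi> k) 0 * z *
       contour_integral (circlepath 0 1)
         (\<lambda>\<zeta>. (u \<zeta> - u (of_real q * z)) / (\<zeta> - of_real q * z) * poly (\<phi> k) \<zeta>
                * cnj (pstar (\<phi> k) (of_real q * \<zeta>)) * w \<zeta>)"

definition coefB ::
  "real \<Rightarrow> (complex \<Rightarrow> complex) \<Rightarrow> (complex \<Rightarrow> complex) \<Rightarrow> (nat \<Rightarrow> complex poly)
    \<Rightarrow> nat \<Rightarrow> complex \<Rightarrow> complex" where
  "coefB q w u \<phi> k z =
     - \<i> * contour_integral (circlepath 0 1)
         (\<lambda>\<zeta>. (u \<zeta> - u (of_real q * z)) / (\<zeta> - of_real q * z) * poly (\<phi> k) \<zeta>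
                * (cnj (poly (\<phi> k) (of_real q * \<zeta>))
                   - kap \<phi> k / poly (\<phi> k) 0 * cnj (pstar (\<phi> k) (of_real q * \<zeta>)))
                * w \<zeta>)"

definition coefM1 ::
  "real \<Rightarrow> (complex \<Rightarrow> complex) \<Rightarrow> (complex \<Rightarrow> complex) \<Rightarrow> complex \<Rightarrow> complex" where
  "coefM1 q w u z =
     contour_integral (circlepath 0 1)
       (\<lambda>\<zeta>. \<zeta> * ((u \<zeta> - u (of_real q * z)) / (\<zeta> - of_real q * z)) * w \<zeta> / (\<i> * \<zeta>))"

end

theory Submission
  imports Defs
begin

lemma cnj_circ: "norm (\<zeta>::complex) = 1 \<Longrightarrow> cnj \<zeta> = inverse \<zeta>"
proof -
  assume h: "norm \<zeta> = 1"
  then have "\<zeta> \<noteq> 0" by auto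
  have "\<zeta> * cnj \<zeta> = 1" using h by (simp add: complex_mult_cnj cmod_def power2_eq_square)
  then show ?thesis using \<open>\<zeta> \<noteq> 0\<close> by (simp add: field_simps)
qed

definition CI :: "(complex \<Rightarrow> complex) \<Rightarrow> complex" where
  "CI F = contour_integral (circlepath 0 1) F"

abbreviation cs :: "(complex \<Rightarrow> complex) \<Rightarrow> bool" where
  "cs F \<equiv> continuous_on (sphere 0 1) F"

lemma CI_int: "cs F \<Longrightarrow> F contour_integrable_on circlepath 0 1"
  by (rule contour_integrable_continuous_circlepath) simp

lemma CI_add: "cs F \<Longrightarrow> cs G \<Longrightarrow> CI (\<lambda>x. F x + G x) = CI F + CI G"
  unfolding CI_def by (rule contour_integral_add; rule CI_int)

lemma CI_diff: "cs F \<Longrightarrow> cs G \<Longrightarrow> CI (\<lambda>x. F x - G x) = CI F - CI G"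
  unfolding CI_def by (rule contour_integral_diff; rule CI_int)

lemma CI_lmul: "cs F \<Longrightarrow> CI (\<lambda>x. c * F x) = c * CI F"
  unfolding CI_def by (rule contour_integral_lmul; rule CI_int)

lemma CI_cong: "(\<And>x. norm x = 1 \<Longrightarrow> F x = G x) \<Longrightarrow> CI F = CI G"
  unfolding CI_def by (rule contour_integral_eq) auto

lemma CI_integral: "CI F = integral {0..1} (\<lambda>t. F (exp (2 * of_real pi * \<i> * of_real t)) *
          (2 * of_real pi * \<i> * exp (2 * of_real pi * \<i> * of_real t)))"
  unfolding CI_def contour_integral_integral vector_derivative_circlepath
  by (simp add: circlepath)

lemma norm_exp_circ: "norm (exp (2 * of_real pi * \<i> * of_real (t::real))) = 1"
  by (simp add: norm_exp_eq_Re)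

lemma CI_cnj_weight:
  assumes "\<And>x. norm x = 1 \<Longrightarrow> cnj (v x) = v x"
  shows "CI (\<lambda>x. cnj (F x) * v x / (\<i> * x)) = cnj (CI (\<lambda>x. F x * v x / (\<i> * x)))"
proof -
  let ?e = "\<lambda>t::real. exp (2 * of_real pi * \<i> * of_real t)"
  have e0: "?e t \<noteq> 0" for t by simp
  have "CI (\<lambda>x. cnj (F x) * v x / (\<i> * x)) = integral {0..1} (\<lambda>t. 2 * of_real pi * (cnj (F (?e t)) * v (?e t)))"
    unfolding CI_integral using e0 by (intro integral_cong) (simp add: field_simps)
  also have "\<dots> = integral {0..1} (\<lambda>t. cnj (2 * of_real pi * (F (?e t) * v (?e t))))"
    using assms[OF norm_exp_circ] by (intro integral_cong) simp
  also have "\<dots> = cnj (integral {0..1} (\<lambda>t. 2 * of_real pi * (F (?e t) * v (?e t))))"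
    by (simp add: integral_cnj)
  also have "integral {0..1} (\<lambda>t. 2 * of_real pi * (F (?e t) * v (?e t))) = CI (\<lambda>x. F x * v x / (\<i> * x))"
    unfolding CI_integral using e0 by (intro integral_cong) (simp add: field_simps)
  finally show ?thesis .
qed


definition revk :: "nat \<Rightarrow> complex poly \<Rightarrow> complex poly" where
  "revk k g = (\<Sum>i\<le>k. monom (cnj (coeff g i)) (k - i))"

lemma poly_revk: "poly (revk k g) x = (\<Sum>i\<le>k. cnj (coeff g i) * x ^ (k - i))"
  by (simp add: revk_def poly_sum poly_monom)

lemma pstar_revk: "pstar p x = poly (revk (degree p) p) x"
  by (simp add: pstar_def poly_revk)

lemma coeff_revk: "coeff (revk k g) j = (if j \<le> k then cnj (coeff g (k - j)) else 0)"
proof -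
  have "coeff (revk k g) j = (\<Sum>i\<le>k. if k - i = j then cnj (coeff g i) else 0)"
    by (simp add: revk_def coeff_sum coeff_monom)
  also have "\<dots> = (\<Sum>i\<in>{..k} \<inter> {i. k - i = j}. cnj (coeff g i))"
    by (simp add: sum.If_cases)
  also have "{..k} \<inter> {i. k - i = j} = (if j \<le> k then {k - j} else {})"
    by auto
  finally show ?thesis by auto
qed

lemma degree_revk: "degree (revk k g) \<le> k"
  by (rule degree_le) (simp add: coeff_revk)

lemma revk_circ:
  assumes "norm x = 1" "degree g \<le> k"
  shows "poly (revk k g) x = x ^ k * cnj (poly g x)"
proof -
  have x0: "x \<noteq> 0" using assms by auto
  have "poly (revk k g) x = (\<Sum>i\<le>k. x ^ k * (cnj (coeff g i) * cnj x ^ i))"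
    unfolding poly_revk
  proof (intro sum.cong refl)
    fix i assume "i \<in> {..k}"
    then have "x ^ (k - i) = x ^ k * inverse x ^ i" using x0 by (simp add: power_diff field_simps)
    then show "cnj (coeff g i) * x ^ (k - i) = x ^ k * (cnj (coeff g i) * cnj x ^ i)"
      using cnj_circ[OF assms(1)] by (simp add: power_inverse)
  qed
  also have "\<dots> = x ^ k * cnj (\<Sum>i\<le>k. coeff g i * x ^ i)"
    by (simp add: sum_distrib_left)
  also have "(\<Sum>i\<le>k. coeff g i * x ^ i) = poly g x"
  proof -
    have "poly g x = poly (\<Sum>i\<le>k. monom (coeff g i) i) x"
      using poly_as_sum_of_monoms'[OF assms(2)] by simp
    then show ?thesis by (simp add: poly_sum poly_monom)
  qed
  finally show ?thesis .
qed

locale setting =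
  fixes q :: real and w u :: "complex \<Rightarrow> complex" and \<phi> :: "nat \<Rightarrow> complex poly"
  assumes q: "0 < q" "q < 1"
    and w_pos: "\<And>\<zeta>. norm \<zeta> = 1 \<Longrightarrow> w \<zeta> \<in> \<real> \<and> 0 < Re (w \<zeta>)"
    and w_hol: "w holomorphic_on annulus q"
    and w_cont: "continuous_on (cannulus q) w"
    and w_norm: "contour_integral (circlepath 0 1) (\<lambda>\<zeta>. w \<zeta> / (\<i> * \<zeta>)) = 1"
    and phi_deg: "\<And>m. degree (\<phi> m) = m"
    and phi_lead: "\<And>m. lead_coeff (\<phi> m) \<in> \<real> \<and> 0 < Re (lead_coeff (\<phi> m))"
    and phi_orth: "\<And>m k. contour_integral (circlepath 0 1)
                      (\<lambda>\<zeta>. poly (\<phi> m) \<zeta> * cnj (poly (\<phi> k) \<zeta>) * w \<zeta> / (\<i> * \<zeta>))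
                    = (if m = k then 1 else 0)"
    and u_def: "\<And>x. norm x = 1 \<Longrightarrow> Dq q w x = - u (of_real q * x) * w (of_real q * x)"
    and u_hol: "u holomorphic_on annulus q"
    and u_cont: "continuous_on (cannulus q) u"
begin

definition ip :: "(complex \<Rightarrow> complex) \<Rightarrow> (complex \<Rightarrow> complex) \<Rightarrow> complex" where
  "ip F G = CI (\<lambda>\<zeta>. F \<zeta> * cnj (G \<zeta>) * w \<zeta> / (\<i> * \<zeta>))"

lemma sph_sub: "sphere 0 1 \<subseteq> cannulus q"
  using q by (auto simp: cannulus_def)

lemma wc: "cs w" using continuous_on_subset[OF w_cont sph_sub] .
lemma uc: "cs u" using continuous_on_subset[OF u_cont sph_sub] .

lemma w_real: "norm x = 1 \<Longrightarrow> cnj (w x) = w x"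
  using w_pos by (simp add: Reals_cnj_iff)

lemma ipc: "cs F \<Longrightarrow> cs G \<Longrightarrow> cs (\<lambda>\<zeta>. F \<zeta> * cnj (G \<zeta>) * w \<zeta> / (\<i> * \<zeta>))"
  using wc by (intro continuous_intros) auto

lemma ip_add1: "cs F \<Longrightarrow> cs G \<Longrightarrow> cs H \<Longrightarrow> ip (\<lambda>x. F x + G x) H = ip F H + ip G H"
proof -
  assume a: "cs F" "cs G" "cs H"
  have "ip (\<lambda>x. F x + G x) H = CI (\<lambda>x. F x * cnj (H x) * w x / (\<i> * x) + G x * cnj (H x) * w x / (\<i> * x))"
    unfolding ip_def by (rule CI_cong) (simp add: distrib_right add_divide_distrib)
  also have "\<dots> = ip F H + ip G H" unfolding ip_def by (rule CI_add; intro ipc a)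
  finally show ?thesis .
qed

lemma ip_diff1: "cs F \<Longrightarrow> cs G \<Longrightarrow> cs H \<Longrightarrow> ip (\<lambda>x. F x - G x) H = ip F H - ip G H"
proof -
  assume a: "cs F" "cs G" "cs H"
  have "ip (\<lambda>x. F x - G x) H = CI (\<lambda>x. F x * cnj (H x) * w x / (\<i> * x) - G x * cnj (H x) * w x / (\<i> * x))"
    unfolding ip_def by (rule CI_cong) (simp add: left_diff_distrib diff_divide_distrib)
  also have "\<dots> = ip F H - ip G H" unfolding ip_def by (rule CI_diff; intro ipc a)
  finally show ?thesis .
qed

lemma ip_mul1: "cs F \<Longrightarrow> cs H \<Longrightarrow> ip (\<lambda>x. c * F x) H = c * ip F H"
proof -
  assume a: "cs F" "cs H"
  have "ip (\<lambda>x. c * F x) H = CI (\<lambda>x. c * (F x * cnj (H x) * w x / (\<i> * x)))"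
    unfolding ip_def by (rule CI_cong) (simp add: mult.assoc)
  also have "\<dots> = c * ip F H" unfolding ip_def by (rule CI_lmul; intro ipc a)
  finally show ?thesis .
qed

lemma ip_add2: "cs F \<Longrightarrow> cs G \<Longrightarrow> cs H \<Longrightarrow> ip H (\<lambda>x. F x + G x) = ip H F + ip H G"
proof -
  assume a: "cs F" "cs G" "cs H"
  have "ip H (\<lambda>x. F x + G x) = CI (\<lambda>x. H x * cnj (F x) * w x / (\<i> * x) + H x * cnj (G x) * w x / (\<i> * x))"
    unfolding ip_def by (rule CI_cong) (simp add: distrib_right distrib_left add_divide_distrib)
  also have "\<dots> = ip H F + ip H G" unfolding ip_def by (rule CI_add; intro ipc a)
  finally show ?thesis .
qed

lemma ip_diff2: "cs F \<Longrightarrow> cs G \<Longrightarrow> cs H \<Longrightarrow> ip H (\<lambda>x. F x - G x) = ip H F - ip H G"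
proof -
  assume a: "cs F" "cs G" "cs H"
  have "ip H (\<lambda>x. F x - G x) = CI (\<lambda>x. H x * cnj (F x) * w x / (\<i> * x) - H x * cnj (G x) * w x / (\<i> * x))"
    unfolding ip_def by (rule CI_cong) (simp add: left_diff_distrib right_diff_distrib diff_divide_distrib)
  also have "\<dots> = ip H F - ip H G" unfolding ip_def by (rule CI_diff; intro ipc a)
  finally show ?thesis .
qed

lemma ip_mul2: "cs F \<Longrightarrow> cs H \<Longrightarrow> ip H (\<lambda>x. c * F x) = cnj c * ip H F"
proof -
  assume a: "cs F" "cs H"
  have "ip H (\<lambda>x. c * F x) = CI (\<lambda>x. cnj c * (H x * cnj (F x) * w x / (\<i> * x)))"
    unfolding ip_def by (rule CI_cong) (simp add: mult_ac)
  also have "\<dots> = cnj c * ip H F" unfolding ip_def by (rule CI_lmul; intro ipc a)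
  finally show ?thesis .
qed

lemma ip_cong: "(\<And>x. norm x = 1 \<Longrightarrow> F x = F' x) \<Longrightarrow> (\<And>x. norm x = 1 \<Longrightarrow> G x = G' x) \<Longrightarrow> ip F G = ip F' G'"
  unfolding ip_def by (rule CI_cong) simp

lemma ip_sym: "ip G F = cnj (ip F G)"
proof -
  have "ip G F = CI (\<lambda>x. cnj (F x * cnj (G x)) * w x / (\<i> * x))"
    unfolding ip_def by (rule CI_cong) simp
  also have "\<dots> = cnj (CI (\<lambda>x. (F x * cnj (G x)) * w x / (\<i> * x)))"
    by (rule CI_cnj_weight) (rule w_real)
  finally show ?thesis unfolding ip_def .
qed

lemma ip_shift: "ip (\<lambda>x. x * F x) (\<lambda>x. x * G x) = ip F G"
  unfolding ip_def
proof (rule CI_cong)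
  fix x :: complex assume "norm x = 1"
  then have "x * cnj x = 1" using cnj_circ[of x] by (auto simp: field_simps)
  moreover have "x * F x * cnj (x * G x) = (x * cnj x) * (F x * cnj (G x))"
    by (simp add: mult_ac)
  ultimately have E: "x * F x * cnj (x * G x) = F x * cnj (G x)"
    by simp
  show "x * F x * cnj (x * G x) * w x / (\<i> * x) = F x * cnj (G x) * w x / (\<i> * x)"
    by (simp only: E)
qed

lemma ip_zero2: "ip F (\<lambda>x. 0) = 0"
  unfolding ip_def CI_def by simp

lemma cs_poly: "cs (poly p)"
  by (intro continuous_intros)

lemma cs_poly': "cs (\<lambda>x. poly p x)"
  by (intro continuous_intros)

abbreviation kp :: "nat \<Rightarrow> complex" where "kp k \<equiv> lead_coeff (\<phi> k)"

lemma kp_real: "cnj (kp k) = kp k"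
  using phi_lead[of k] by (simp add: Reals_cnj_iff)

lemma kp_nz: "kp k \<noteq> 0"
  using phi_lead[of k] by auto

lemma orth: "ip (poly (\<phi> m)) (poly (\<phi> k)) = (if m = k then 1 else 0)"
  unfolding ip_def CI_def using phi_orth by simp

end

context setting
begin

lemma cs_sum: "finite S \<Longrightarrow> (\<And>i. i \<in> S \<Longrightarrow> cs (F i)) \<Longrightarrow> cs (\<lambda>x. \<Sum>i\<in>S. F i x)"
  by (intro continuous_intros) auto

lemma ip_sum1:
  assumes "finite S" "\<And>i. i \<in> S \<Longrightarrow> cs (F i)" "cs H"
  shows "ip (\<lambda>x. \<Sum>i\<in>S. c i * F i x) H = (\<Sum>i\<in>S. c i * ip (F i) H)"
  using assms
proof (induction S rule: finite_induct)
  case empty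
  then show ?case by (simp add: ip_def CI_def)
next
  case (insert a S)
  have "ip (\<lambda>x. \<Sum>i\<in>insert a S. c i * F i x) H = ip (\<lambda>x. c a * F a x + (\<Sum>i\<in>S. c i * F i x)) H"
    using insert by simp
  also have "\<dots> = ip (\<lambda>x. c a * F a x) H + ip (\<lambda>x. \<Sum>i\<in>S. c i * F i x) H"
    using insert by (intro ip_add1) (auto intro!: continuous_intros)
  also have "\<dots> = c a * ip (F a) H + (\<Sum>i\<in>S. c i * ip (F i) H)"
    using insert by (subst ip_mul1) auto
  finally show ?case using insert by simp
qed

lemma ip_sum2:
  assumes "finite S" "\<And>i. i \<in> S \<Longrightarrow> cs (F i)" "cs H"
  shows "ip H (\<lambda>x. \<Sum>i\<in>S. c i * F i x) = (\<Sum>i\<in>S. cnj (c i) * ip H (F i))"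
proof -
  have "ip H (\<lambda>x. \<Sum>i\<in>S. c i * F i x) = cnj (ip (\<lambda>x. \<Sum>i\<in>S. c i * F i x) H)"
    by (rule ip_sym)
  also have "\<dots> = cnj (\<Sum>i\<in>S. c i * ip (F i) H)" using assms by (subst ip_sum1) auto
  also have "\<dots> = (\<Sum>i\<in>S. cnj (c i) * ip H (F i))"
    by (simp add: ip_sym[of H])
  finally show ?thesis .
qed

lemma deg0_eq: "degree (g::complex poly) = 0 \<Longrightarrow> coeff g 0 = 0 \<Longrightarrow> g = 0"
  by (metis degree_0_id pCons_0_0)

lemma span:
  "degree g \<le> d \<Longrightarrow> \<exists>c. g = (\<Sum>i\<le>d. smult (c i) (\<phi> i))"
proof (induction d arbitrary: g)
  case 0
  define g' where "g' = g - smult (coeff g 0 / kp 0) (\<phi> 0)"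
  have "degree (smult (coeff g 0 / kp 0) (\<phi> 0)) \<le> 0"
    using degree_smult_le[of "coeff g 0 / kp 0" "\<phi> 0"] phi_deg[of 0] by simp
  then have "degree g' \<le> 0" unfolding g'_def using 0 by (intro degree_diff_le) auto
  then have "degree g' = 0" by simp
  moreover have "coeff g' 0 = 0" using kp_nz[of 0] phi_deg[of 0] by (simp add: g'_def)
  ultimately have "g' = 0" by (rule deg0_eq)
  then have "g = smult (coeff g 0 / kp 0) (\<phi> 0)" by (simp add: g'_def)
  then show ?case by (intro exI[of _ "\<lambda>i. coeff g 0 / kp 0"]) simp
next
  case (Suc d)
  define c0 where "c0 = coeff g (Suc d) / kp (Suc d)"
  define g' where "g' = g - smult c0 (\<phi> (Suc d))"
  have "degree (smult c0 (\<phi> (Suc d))) \<le> Suc d"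
    using degree_smult_le[of c0 "\<phi> (Suc d)"] phi_deg[of "Suc d"] by simp
  then have dg: "degree g' \<le> Suc d" unfolding g'_def using Suc.prems by (intro degree_diff_le) auto
  have "coeff g' (Suc d) = 0" using kp_nz[of "Suc d"] phi_deg[of "Suc d"] by (simp add: g'_def c0_def)
  then have "degree g' \<le> d"
  proof -
    assume c: "coeff g' (Suc d) = 0"
    show ?thesis
    proof (rule ccontr)
      assume "\<not> degree g' \<le> d"
      then have "degree g' = Suc d" using dg by simp
      then have "g' = 0" using c by (metis leading_coeff_0_iff)
      then show False using \<open>degree g' = Suc d\<close> by simp
    qed
  qed
  from Suc.IH[OF this] obtain c where c: "g' = (\<Sum>i\<le>d. smult (c i) (\<phi> i))" by blast
  define c' where "c' = c(Suc d := c0)"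
  have "g = g' + smult c0 (\<phi> (Suc d))" by (simp add: g'_def)
  also have "\<dots> = (\<Sum>i\<le>Suc d. smult (c' i) (\<phi> i))"
    by (simp add: c c'_def)
  finally show ?case by blast
qed

lemma poly_sum_smult: "poly (\<Sum>i\<le>d. smult (c i) (\<phi> i)) = (\<lambda>x. \<Sum>i\<le>d. c i * poly (\<phi> i) x)"
  by (rule ext) (simp add: poly_sum)

lemma ip_span2: "ip F (poly (\<Sum>i\<le>d. smult (c i) (\<phi> i))) = (\<Sum>i\<le>d. cnj (c i) * ip F (poly (\<phi> i)))"
  if "cs F" for F
proof -
  have "ip F (poly (\<Sum>i\<le>d. smult (c i) (\<phi> i))) = ip F (\<lambda>x. \<Sum>i\<le>d. c i * poly (\<phi> i) x)"
    by (simp only: poly_sum_smult)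
  also have "\<dots> = (\<Sum>i\<le>d. cnj (c i) * ip F (poly (\<phi> i)))"
    using that by (subst ip_sum2) (auto intro: cs_poly)
  finally show ?thesis .
qed

lemma ip_span1: "ip (poly (\<Sum>i\<le>d. smult (c i) (\<phi> i))) F = (\<Sum>i\<le>d. c i * ip (poly (\<phi> i)) F)"
  if "cs F" for F
proof -
  have "ip (poly (\<Sum>i\<le>d. smult (c i) (\<phi> i))) F = ip (\<lambda>x. \<Sum>i\<le>d. c i * poly (\<phi> i) x) F"
    by (simp only: poly_sum_smult)
  also have "\<dots> = (\<Sum>i\<le>d. c i * ip (poly (\<phi> i)) F)"
    using that by (subst ip_sum1) (auto intro: cs_poly)
  finally show ?thesis .
qed

lemma coeff_phi_high: "i < k \<Longrightarrow> coeff (\<phi> i) k = 0"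
  using phi_deg[of i] by (simp add: coeff_eq_0)

lemma O2:
  assumes "degree g \<le> k"
  shows "ip (poly (\<phi> k)) (poly g) = cnj (coeff g k) / kp k"
proof -
  obtain c where c: "g = (\<Sum>i\<le>k. smult (c i) (\<phi> i))" using span[OF assms] by blast
  have "ip (poly (\<phi> k)) (poly g) = (\<Sum>i\<le>k. cnj (c i) * ip (poly (\<phi> k)) (poly (\<phi> i)))"
    by (subst c, rule ip_span2, rule cs_poly)
  also have "\<dots> = (\<Sum>i\<le>k. if i = k then cnj (c i) else 0)"
    by (intro sum.cong) (auto simp: orth)
  also have "\<dots> = cnj (c k)" by simp
  finally have 1: "ip (poly (\<phi> k)) (poly g) = cnj (c k)" .
  have "coeff g k = (\<Sum>i\<le>k. c i * coeff (\<phi> i) k)"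
    by (subst c) (simp add: coeff_sum)
  also have "\<dots> = (\<Sum>i\<le>k. if i = k then c i * kp k else 0)"
    by (intro sum.cong) (auto simp: coeff_phi_high phi_deg)
  also have "\<dots> = c k * kp k" by simp
  finally have "c k = coeff g k / kp k" using kp_nz[of k] by (simp add: field_simps)
  then show ?thesis using 1 kp_real[of k] by simp
qed

lemma O1:
  assumes "degree g < k"
  shows "ip (poly (\<phi> k)) (poly g) = 0"
  using O2[of g k] assms by (simp add: coeff_eq_0)

lemma EXP:
  assumes "degree H \<le> d" "\<And>i. i \<le> d \<Longrightarrow> ip (poly H) (poly (\<phi> i)) = 0"
  shows "H = 0"
proof -
  obtain c where c: "H = (\<Sum>i\<le>d. smult (c i) (\<phi> i))" using span[OF assms(1)] by blast
  have "c j = 0" if "j \<le> d" for j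
  proof -
    have "ip (poly H) (poly (\<phi> j)) = (\<Sum>i\<le>d. c i * ip (poly (\<phi> i)) (poly (\<phi> j)))"
      by (subst c, rule ip_span1, rule cs_poly)
    also have "\<dots> = (\<Sum>i\<le>d. if i = j then c i else 0)"
      by (intro sum.cong) (auto simp: orth)
    also have "\<dots> = c j" using that by simp
    finally show ?thesis using assms(2)[OF that] by simp
  qed
  then show ?thesis by (simp add: c)
qed

lemma pstar_circ: "norm x = 1 \<Longrightarrow> pstar (\<phi> k) x = x ^ k * cnj (poly (\<phi> k) x)"
  using revk_circ[of x "\<phi> k" k] by (simp add: pstar_revk phi_deg)

lemma cs_pstar: "cs (pstar p)"
proof -
  have "pstar p = poly (revk (degree p) p)" by (rule ext) (simp add: pstar_revk)
  then show ?thesis by (simp add: cs_poly)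
qed

lemma O3:
  assumes "degree g \<le> k"
  shows "ip (pstar (\<phi> k)) (poly g) = cnj (coeff g 0) / kp k"
proof -
  have "ip (pstar (\<phi> k)) (poly g) = ip (poly (revk k g)) (poly (\<phi> k))"
    unfolding ip_def
  proof (rule CI_cong)
    fix x :: complex assume x: "norm x = 1"
    have "pstar (\<phi> k) x * cnj (poly g x) = cnj (poly (\<phi> k) x) * (x ^ k * cnj (poly g x))"
      using pstar_circ[OF x] by (simp add: mult_ac)
    also have "\<dots> = poly (revk k g) x * cnj (poly (\<phi> k) x)"
      using revk_circ[OF x assms] by simp
    finally show "pstar (\<phi> k) x * cnj (poly g x) * w x / (\<i> * x) =
        poly (revk k g) x * cnj (poly (\<phi> k) x) * w x / (\<i> * x)" by simp
  qed
  also have "\<dots> = cnj (ip (poly (\<phi> k)) (poly (revk k g)))" by (rule ip_sym)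
  also have "\<dots> = cnj (cnj (coeff (revk k g) k) / kp k)" by (subst O2) (auto intro: degree_revk)
  also have "\<dots> = cnj (coeff g 0) / kp k" using kp_real[of k] by (simp add: coeff_revk)
  finally show ?thesis .
qed

end

context setting
begin

abbreviation ac :: "nat \<Rightarrow> complex" where "ac k \<equiv> poly (\<phi> k) 0"

lemma ac_coeff: "ac k = coeff (\<phi> k) 0"
  by (simp add: poly_0_coeff_0)

lemma cs_x: "cs (\<lambda>x. x * poly p x)"
  by (intro continuous_intros)

lemma poly_pCons0: "poly (pCons 0 p) = (\<lambda>x. x * poly p x)"
  by (rule ext) simp

lemma pstar_poly: "pstar (\<phi> k) = poly (revk k (\<phi> k))"
  by (rule ext) (simp add: pstar_revk phi_deg)

lemma F1poly:
  assumes j: "1 \<le> j"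
  shows "smult (kp (j-1)) (\<phi> j) = smult (kp j) (pCons 0 (\<phi> (j-1))) + smult (ac j) (revk (j-1) (\<phi> (j-1)))"
proof -
  define D where "D = smult (kp (j-1)) (\<phi> j) - smult (kp j) (pCons 0 (\<phi> (j-1))) - smult (ac j) (revk (j-1) (\<phi> (j-1)))"
  have c0: "coeff D 0 = 0"
    using kp_real[of "j-1"] phi_deg[of "j-1"] by (simp add: D_def coeff_revk ac_coeff)
  have d1: "degree (smult (kp (j-1)) (\<phi> j)) \<le> j" using phi_deg[of j] by (simp add: degree_smult_le)
  have d2: "degree (smult (kp j) (pCons 0 (\<phi> (j-1)))) \<le> j"
    using phi_deg[of "j-1"] j degree_smult_le[of "kp j" "pCons 0 (\<phi> (j-1))"] degree_pCons_le[of 0 "\<phi> (j-1)"]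
    by simp
  have d3: "degree (smult (ac j) (revk (j-1) (\<phi> (j-1)))) \<le> j"
    using degree_revk[of "j-1" "\<phi> (j-1)"] degree_smult_le[of "ac j" "revk (j-1) (\<phi> (j-1))"] by simp
  have dD: "degree D \<le> j" unfolding D_def using d1 d2 d3 by (intro degree_diff_le) auto
  have cj: "coeff D j = 0"
  proof -
    obtain m where m: "j = Suc m" using j by (cases j) auto
    have "coeff D j = kp (j-1) * kp j - kp j * coeff (pCons 0 (\<phi> (j-1))) j - ac j * coeff (revk (j-1) (\<phi> (j-1))) j"
      unfolding D_def by (simp only: coeff_diff coeff_smult phi_deg)
    also have "coeff (pCons 0 (\<phi> (j-1))) j = kp (j-1)" using m phi_deg[of m] by simp
    also have "coeff (revk (j-1) (\<phi> (j-1))) j = 0" using m by (simp add: coeff_revk)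
    finally show ?thesis by simp
  qed
  have dD': "degree D \<le> j - 1"
  proof (rule ccontr)
    assume "\<not> degree D \<le> j - 1"
    then have "degree D = j" using dD by simp
    then have "D = 0" using cj by (metis leading_coeff_0_iff)
    then show False using \<open>degree D = j\<close> \<open>\<not> degree D \<le> j - 1\<close> by simp
  qed
  obtain H where DH: "D = pCons 0 H" using c0 by (metis coeff_pCons_0 pCons_cases)
  have "D = 0"
  proof (cases "j = 1")
    case True
    then show ?thesis using dD' c0 deg0_eq by simp
  next
    case False
    then have j2: "2 \<le> j" using j by simp
    have dH: "degree H \<le> j - 2"
    proof (cases "H = 0")
      case True then show ?thesis by simp
    next
      case False
      then have "degree D = Suc (degree H)" using DH by simp
      then show ?thesis using dD' by simp
    qed
    have polyD: "poly D = (\<lambda>x. kp (j-1) * poly (\<phi> j) x - kp j * (x * poly (\<phi> (j-1)) x)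
                   - ac j * pstar (\<phi> (j-1)) x)"
      by (rule ext) (simp add: D_def pstar_revk phi_deg)
    have "H = 0"
    proof (rule EXP[OF dH])
      fix i assume i: "i \<le> j - 2"
      have "ip (poly H) (poly (\<phi> i)) = ip (\<lambda>x. x * poly H x) (\<lambda>x. x * poly (\<phi> i) x)"
        by (rule ip_shift[symmetric])
      also have "\<dots> = ip (poly D) (poly (pCons 0 (\<phi> i)))"
        by (simp add: DH poly_pCons0)
      also have "\<dots> = kp (j-1) * ip (poly (\<phi> j)) (poly (pCons 0 (\<phi> i)))
                     - kp j * ip (\<lambda>x. x * poly (\<phi> (j-1)) x) (\<lambda>x. x * poly (\<phi> i) x)
                     - ac j * ip (pstar (\<phi> (j-1))) (poly (pCons 0 (\<phi> i)))"
        unfolding polyD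
        by (simp add: ip_diff1 ip_mul1 cs_poly cs_x cs_pstar poly_pCons0 continuous_intros)
      also have "ip (poly (\<phi> j)) (poly (pCons 0 (\<phi> i))) = 0"
        using i j2 phi_deg[of i] by (intro O1) auto
      also have "ip (\<lambda>x. x * poly (\<phi> (j-1)) x) (\<lambda>x. x * poly (\<phi> i) x) = 0"
        using i j2 by (simp add: ip_shift orth)
      also have "ip (pstar (\<phi> (j-1))) (poly (pCons 0 (\<phi> i))) = 0"
        using i j2 phi_deg[of i] by (subst O3) auto
      finally show "ip (poly H) (poly (\<phi> i)) = 0" by simp
    qed
    then show ?thesis using DH by simp
  qed
  then show ?thesis unfolding D_def by (simp add: algebra_simps)
qed

lemma F1:
  assumes "1 \<le> j"
  shows "kp (j-1) * poly (\<phi> j) x = kp j * (x * poly (\<phi> (j-1)) x) + ac j * pstar (\<phi> (j-1)) x"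
proof -
  have "poly (smult (kp (j-1)) (\<phi> j)) x = poly (smult (kp j) (pCons 0 (\<phi> (j-1))) + smult (ac j) (revk (j-1) (\<phi> (j-1)))) x"
    using F1poly[OF assms] by simp
  then show ?thesis by (simp add: pstar_revk phi_deg)
qed

lemma F2poly:
  assumes j: "1 \<le> j"
  shows "smult (kp (j-1)) (revk j (\<phi> j)) = smult (kp j) (revk (j-1) (\<phi> (j-1))) + smult (cnj (ac j)) (pCons 0 (\<phi> (j-1)))"
proof (rule poly_eqI)
  fix n
  have E: "coeff (smult (kp (j-1)) (\<phi> j)) m = coeff (smult (kp j) (pCons 0 (\<phi> (j-1))) + smult (ac j) (revk (j-1) (\<phi> (j-1)))) m" for m
    using F1poly[OF j] by simp
  show "coeff (smult (kp (j-1)) (revk j (\<phi> j))) n = coeff (smult (kp j) (revk (j-1) (\<phi> (j-1))) + smult (cnj (ac j)) (pCons 0 (\<phi> (j-1)))) n"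
  proof (cases "n \<le> j")
    case True
    have e: "kp (j-1) * coeff (\<phi> j) (j-n) = kp j * coeff (pCons 0 (\<phi> (j-1))) (j-n) + ac j * coeff (revk (j-1) (\<phi> (j-1))) (j-n)"
      using E[of "j-n"] by (simp only: coeff_add coeff_smult)
    have e1: "cnj (coeff (pCons 0 (\<phi> (j-1))) (j-n)) = coeff (revk (j-1) (\<phi> (j-1))) n"
    proof (cases "n = j")
      case True then show ?thesis using j by (simp add: coeff_revk)
    next
      case False
      then have "j - n = Suc (j - 1 - n)" using True j by simp
      then show ?thesis using False True by (simp add: coeff_revk)
    qed
    have e2: "cnj (coeff (revk (j-1) (\<phi> (j-1))) (j-n)) = coeff (pCons 0 (\<phi> (j-1))) n"
    proof (cases "n = 0")
      case True then show ?thesis using j by (simp add: coeff_revk)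
    next
      case False
      then obtain m where m: "n = Suc m" by (cases n) auto
      have "j - 1 - (j - n) = m" using m True by simp
      then show ?thesis using m True by (simp add: coeff_revk)
    qed
    have "cnj (kp (j-1) * coeff (\<phi> j) (j-n)) = cnj (kp j * coeff (pCons 0 (\<phi> (j-1))) (j-n) + ac j * coeff (revk (j-1) (\<phi> (j-1))) (j-n))"
      using e by simp
    then have M: "kp (j-1) * cnj (coeff (\<phi> j) (j-n)) = kp j * coeff (revk (j-1) (\<phi> (j-1))) n + cnj (ac j) * coeff (pCons 0 (\<phi> (j-1))) n"
      by (simp only: complex_cnj_add complex_cnj_mult kp_real e1 e2)
    have L: "coeff (smult (kp (j-1)) (revk j (\<phi> j))) n = kp (j-1) * cnj (coeff (\<phi> j) (j-n))"
      using True by (simp add: coeff_revk)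
    have R: "coeff (smult (kp j) (revk (j-1) (\<phi> (j-1))) + smult (cnj (ac j)) (pCons 0 (\<phi> (j-1)))) n
        = kp j * coeff (revk (j-1) (\<phi> (j-1))) n + cnj (ac j) * coeff (pCons 0 (\<phi> (j-1))) n"
      by (simp only: coeff_add coeff_smult)
    show ?thesis by (simp only: L R M)
  next
    case False
    have Z1: "coeff (pCons 0 (\<phi> (j-1))) n = 0"
      using False j phi_deg[of "j-1"] by (cases n) (auto simp: coeff_eq_0)
    have Z2: "coeff (revk (j-1) (\<phi> (j-1))) n = 0" using False by (simp add: coeff_revk)
    have Z3: "coeff (revk j (\<phi> j)) n = 0" using False by (simp add: coeff_revk)
    have R: "coeff (smult (kp j) (revk (j-1) (\<phi> (j-1))) + smult (cnj (ac j)) (pCons 0 (\<phi> (j-1)))) n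
        = kp j * coeff (revk (j-1) (\<phi> (j-1))) n + cnj (ac j) * coeff (pCons 0 (\<phi> (j-1))) n"
      by (simp only: coeff_add coeff_smult)
    show ?thesis unfolding R coeff_smult Z1 Z2 Z3 by simp
  qed
qed

lemma F2:
  assumes "1 \<le> j"
  shows "kp (j-1) * pstar (\<phi> j) x = kp j * pstar (\<phi> (j-1)) x + cnj (ac j) * (x * poly (\<phi> (j-1)) x)"
proof -
  have "poly (smult (kp (j-1)) (revk j (\<phi> j))) x = poly (smult (kp j) (revk (j-1) (\<phi> (j-1))) + smult (cnj (ac j)) (pCons 0 (\<phi> (j-1)))) x"
    using F2poly[OF assms] by simp
  then show ?thesis by (simp add: pstar_revk phi_deg)
qed

lemma ipF1:
  assumes "1 \<le> j" "cs G"
  shows "kp (j-1) * ip (poly (\<phi> j)) G = kp j * ip (\<lambda>x. x * poly (\<phi> (j-1)) x) G + ac j * ip (pstar (\<phi> (j-1))) G"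
proof -
  have "kp (j-1) * ip (poly (\<phi> j)) G = ip (\<lambda>x. kp (j-1) * poly (\<phi> j) x) G"
    using assms by (simp add: ip_mul1 cs_poly)
  also have "\<dots> = ip (\<lambda>x. kp j * (x * poly (\<phi> (j-1)) x) + ac j * pstar (\<phi> (j-1)) x) G"
    using F1[OF assms(1)] by simp
  also have "\<dots> = kp j * ip (\<lambda>x. x * poly (\<phi> (j-1)) x) G + ac j * ip (pstar (\<phi> (j-1))) G"
    using assms by (simp add: ip_add1 ip_mul1 cs_x cs_pstar continuous_intros)
  finally show ?thesis .
qed

lemma ps_norm: "ip (pstar (\<phi> k)) (pstar (\<phi> k)) = 1"
proof -
  have "ip (pstar (\<phi> k)) (pstar (\<phi> k)) = ip (pstar (\<phi> k)) (poly (revk k (\<phi> k)))"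
    by (simp add: pstar_poly)
  also have "\<dots> = cnj (coeff (revk k (\<phi> k)) 0) / kp k"
    by (rule O3) (rule degree_revk)
  also have "\<dots> = 1" using kp_real[of k] kp_nz[of k] phi_deg[of k] by (simp add: coeff_revk)
  finally show ?thesis .
qed

lemma K2:
  assumes j: "1 \<le> j"
  shows "kp j * kp j = kp (j-1) * kp (j-1) + ac j * cnj (ac j)"
proof -
  have h1: "ip (poly (\<phi> j)) (pstar (\<phi> (j-1))) = 0"
    unfolding pstar_poly using j degree_revk[of "j-1" "\<phi> (j-1)"] by (intro O1) auto
  have "kp (j-1) * ip (poly (\<phi> j)) (pstar (\<phi> (j-1))) = kp j * ip (\<lambda>x. x * poly (\<phi> (j-1)) x) (pstar (\<phi> (j-1))) + ac j * ip (pstar (\<phi> (j-1))) (pstar (\<phi> (j-1)))"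
    using j by (intro ipF1) (auto intro: cs_pstar)
  then have "kp j * ip (\<lambda>x. x * poly (\<phi> (j-1)) x) (pstar (\<phi> (j-1))) + ac j = 0"
    using h1 ps_norm by simp
  then have "kp j * ip (\<lambda>x. x * poly (\<phi> (j-1)) x) (pstar (\<phi> (j-1))) = - ac j"
    by (simp add: eq_neg_iff_add_eq_0)
  then have X: "ip (\<lambda>x. x * poly (\<phi> (j-1)) x) (pstar (\<phi> (j-1))) = - ac j / kp j"
    using kp_nz[of j] by (simp add: field_simps)
  have h2: "ip (poly (\<phi> j)) (\<lambda>x. x * poly (\<phi> (j-1)) x) = kp (j-1) / kp j"
  proof -
    have "ip (poly (\<phi> j)) (\<lambda>x. x * poly (\<phi> (j-1)) x) = ip (poly (\<phi> j)) (poly (pCons 0 (\<phi> (j-1))))"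
      by (simp add: poly_pCons0)
    also have "\<dots> = cnj (coeff (pCons 0 (\<phi> (j-1))) j) / kp j"
      using j phi_deg[of "j-1"] by (intro O2) auto
    also have "coeff (pCons 0 (\<phi> (j-1))) j = kp (j-1)" using j phi_deg[of "j-1"] by (cases j) auto
    finally show ?thesis using kp_real by simp
  qed
  have "kp (j-1) * ip (poly (\<phi> j)) (\<lambda>x. x * poly (\<phi> (j-1)) x) = kp j * ip (\<lambda>x. x * poly (\<phi> (j-1)) x) (\<lambda>x. x * poly (\<phi> (j-1)) x) + ac j * ip (pstar (\<phi> (j-1))) (\<lambda>x. x * poly (\<phi> (j-1)) x)"
    using j by (intro ipF1) (auto intro: cs_x)
  also have "ip (\<lambda>x. x * poly (\<phi> (j-1)) x) (\<lambda>x. x * poly (\<phi> (j-1)) x) = 1"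
    by (simp add: ip_shift orth)
  also have "ip (pstar (\<phi> (j-1))) (\<lambda>x. x * poly (\<phi> (j-1)) x) = cnj (- ac j / kp j)"
    by (subst ip_sym) (simp only: X)
  finally have "kp (j-1) * (kp (j-1) / kp j) = kp j + ac j * cnj (- ac j / kp j)"
    using h2 by simp
  then show ?thesis using kp_nz[of j] kp_real[of j] by (simp add: field_simps)
qed

lemma SI1:
  assumes j: "1 \<le> j"
  shows "kp (j-1) * (x * poly (\<phi> (j-1)) x) = kp j * poly (\<phi> j) x - ac j * pstar (\<phi> j) x"
proof -
  have "kp (j-1) * (kp (j-1) * (x * poly (\<phi> (j-1)) x)) = kp (j-1) * (kp j * poly (\<phi> j) x - ac j * pstar (\<phi> j) x)"
  proof -
    have "kp (j-1) * (kp j * poly (\<phi> j) x - ac j * pstar (\<phi> j) x)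
        = kp j * (kp (j-1) * poly (\<phi> j) x) - ac j * (kp (j-1) * pstar (\<phi> j) x)"
      by (simp add: algebra_simps)
    also have "\<dots> = (kp j * kp j - ac j * cnj (ac j)) * (x * poly (\<phi> (j-1)) x)"
      unfolding F1[OF j] F2[OF j] by (simp add: algebra_simps)
    also have "\<dots> = kp (j-1) * (kp (j-1) * (x * poly (\<phi> (j-1)) x))"
      using K2[OF j] by simp
    finally show ?thesis by metis
  qed
  then show ?thesis by (rule mult_left_cancel[OF kp_nz, THEN iffD1])
qed

lemma SI2:
  assumes j: "1 \<le> j"
  shows "kp (j-1) * pstar (\<phi> (j-1)) x = kp j * pstar (\<phi> j) x - cnj (ac j) * poly (\<phi> j) x"
proof -
  have "kp (j-1) * (kp j * pstar (\<phi> j) x - cnj (ac j) * poly (\<phi> j) x)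
        = kp j * (kp (j-1) * pstar (\<phi> j) x) - cnj (ac j) * (kp (j-1) * poly (\<phi> j) x)"
    by (simp add: algebra_simps)
  also have "\<dots> = (kp j * kp j - ac j * cnj (ac j)) * pstar (\<phi> (j-1)) x"
    unfolding F1[OF j] F2[OF j] by (simp add: algebra_simps)
  also have "\<dots> = kp (j-1) * (kp (j-1) * pstar (\<phi> (j-1)) x)"
    using K2[OF j] by simp
  finally show ?thesis by (rule mult_left_cancel[OF kp_nz, THEN iffD1, symmetric])
qed

end

lemma circ_integral: "contour_integral (circlepath 0 r) f =
   integral {0..1} (\<lambda>t. f (of_real r * exp (2 * of_real pi * \<i> * of_real t)) *
        (2 * of_real pi * \<i> * of_real r * exp (2 * of_real pi * \<i> * of_real t)))"
  unfolding contour_integral_integral vector_derivative_circlepath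
  by (simp add: circlepath)

lemma open_annulus: "open (annulus q)"
  unfolding annulus_def by (intro open_Collect_conj open_Collect_less continuous_intros)

lemma annulus_cauchy:
  assumes q: "0 < q" "q < 1" and hol: "f holomorphic_on annulus q" and cont: "continuous_on (cannulus q) f"
  shows "contour_integral (circlepath 0 1) f = contour_integral (circlepath 0 q) f"
proof -
  let ?e = "\<lambda>t::real. exp (2 * of_real pi * \<i> * of_real t)"
  define \<Phi> where "\<Phi> r = contour_integral (circlepath 0 r) f" for r :: real
  have ne: "norm (?e t) = 1" for t by (simp add: norm_exp_eq_Re)
  have contP: "continuous_on {q..1} \<Phi>"
  proof -
    have "continuous_on ({q..1} \<times> cbox 0 1) (\<lambda>(r, t). f (of_real r * ?e t) * (2 * of_real pi * \<i> * of_real r * ?e t))"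
    proof -
      have c1: "continuous_on ({q..1} \<times> cbox 0 (1::real)) (\<lambda>x. of_real (fst x) * ?e (snd x))"
        by (intro continuous_intros)
      have im: "(\<lambda>x. of_real (fst x) * ?e (snd x)) ` ({q..1} \<times> cbox 0 (1::real)) \<subseteq> cannulus q"
        using q by (auto simp: cannulus_def norm_mult ne)
      have "continuous_on ({q..1} \<times> cbox 0 (1::real)) (\<lambda>x. f (of_real (fst x) * ?e (snd x)))"
        by (rule continuous_on_compose2[OF cont c1 im])
      then have "continuous_on ({q..1} \<times> cbox 0 (1::real)) (\<lambda>x. f (of_real (fst x) * ?e (snd x)) * (2 * of_real pi * \<i> * of_real (fst x) * ?e (snd x)))"
        by (intro continuous_intros)
      then show ?thesis by (simp add: case_prod_beta)
    qed
    from integral_continuous_on_param[OF this]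
    have "continuous_on {q..1} (\<lambda>r. integral (cbox 0 1) (\<lambda>t. f (of_real r * ?e t) * (2 * of_real pi * \<i> * of_real r * ?e t)))" .
    then show ?thesis unfolding \<Phi>_def circ_integral by simp
  qed
  define r0 where "r0 = (q + 1) / 2"
  have r0: "q < r0" "r0 < 1" using q by (auto simp: r0_def)
  have const: "\<Phi> r = \<Phi> r0" if r: "q < r" "r < 1" for r
  proof -
    have "homotopic_loops (annulus q) (circlepath 0 r) (circlepath 0 r0)"
    proof (rule homotopic_loops_linear)
      fix t :: real assume "t \<in> {0..1}"
      show "closed_segment (circlepath 0 r t) (circlepath 0 r0 t) \<subseteq> annulus q"
      proof
        fix x assume "x \<in> closed_segment (circlepath 0 r t) (circlepath 0 r0 t)"
        then obtain s where s: "0 \<le> s" "s \<le> 1" "x = (1 - s) *\<^sub>R circlepath 0 r t + s *\<^sub>R circlepath 0 r0 t"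
          by (auto simp: in_segment)
        have "x = of_real ((1 - s) * r + s * r0) * ?e t"
          using s(3) by (simp add: circlepath scaleR_conv_of_real algebra_simps)
        moreover have "q < (1 - s) * r + s * r0" "(1 - s) * r + s * r0 < 1"
        proof -
          have m1: "(1 - s) * min r r0 \<le> (1 - s) * r" by (rule mult_left_mono) (use s in auto)
          have m2: "s * min r r0 \<le> s * r0" by (rule mult_left_mono) (use s in auto)
          have m3: "(1 - s) * max r r0 \<ge> (1 - s) * r" by (rule mult_left_mono) (use s in auto)
          have m4: "s * max r r0 \<ge> s * r0" by (rule mult_left_mono) (use s in auto)
          have e1: "(1 - s) * min r r0 + s * min r r0 = min r r0" by (simp add: algebra_simps)
          have e2: "(1 - s) * max r r0 + s * max r r0 = max r r0" by (simp add: algebra_simps)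
          have "q < min r r0" "max r r0 < 1" using r r0 by auto
          then show "q < (1 - s) * r + s * r0" "(1 - s) * r + s * r0 < 1"
            using m1 m2 m3 m4 e1 e2 by linarith+
        qed
        ultimately have "norm x = \<bar>(1 - s) * r + s * r0\<bar>" "q < (1 - s) * r + s * r0" "(1 - s) * r + s * r0 < 1"
          by (simp only: norm_mult norm_of_real ne mult_1_right)+
        then show "x \<in> annulus q" using q
          by (simp add: annulus_def)
      qed
    qed auto
    then have "contour_integral (circlepath 0 r) f = contour_integral (circlepath 0 r0) f"
      by (rule Cauchy_theorem_homotopic_loops[OF _ open_annulus hol]) auto
    then show ?thesis by (simp add: \<Phi>_def)
  qed
  have cl: "closed {r \<in> {q..1}. \<Phi> r = \<Phi> r0}"
    by (rule continuous_closed_preimage_constant[OF contP]) simp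
  have "{q<..<1} \<subseteq> {r \<in> {q..1}. \<Phi> r = \<Phi> r0}" using const by auto
  then have "closure {q<..<1} \<subseteq> {r \<in> {q..1}. \<Phi> r = \<Phi> r0}"
    using cl by (rule closure_minimal)
  then have "{q..1} \<subseteq> {r \<in> {q..1}. \<Phi> r = \<Phi> r0}" using q by simp
  moreover have "1 \<in> {q..1}" "q \<in> {q..1}" using q by auto
  ultimately have "\<Phi> 1 = \<Phi> r0" "\<Phi> q = \<Phi> r0" by blast+
  then show ?thesis by (simp add: \<Phi>_def)
qed

lemma circ_scale:
  "contour_integral (circlepath 0 q) f = contour_integral (circlepath 0 1) (\<lambda>x. of_real q * f (of_real q * x))"
  unfolding circ_integral by (intro integral_cong) (simp add: algebra_simps)


lemma pstar_scaled_circ: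
  fixes Q :: complex
  assumes x: "norm x = 1" and Q: "Q \<noteq> 0" "cnj Q = Q"
  shows "cnj (pstar p (Q * x)) = Q ^ degree p / x ^ degree p * poly p (x / Q)"
proof -
  let ?d = "degree p"
  have x0: "x \<noteq> 0" using x by auto
  have "cnj (pstar p (Q * x)) = (\<Sum>i\<le>?d. coeff p i * (Q ^ (?d - i) * cnj x ^ (?d - i)))"
    by (simp add: pstar_def Q power_mult_distrib)
  also have "\<dots> = (\<Sum>i\<le>?d. Q ^ ?d / x ^ ?d * (coeff p i * (x / Q) ^ i))"
  proof (intro sum.cong refl)
    fix i assume "i \<in> {..?d}"
    then have i: "i \<le> ?d" by simp
    have "Q ^ (?d - i) = Q ^ ?d / Q ^ i" using Q i by (simp add: power_diff)
    moreover have "cnj x ^ (?d - i) = x ^ i / x ^ ?d"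
    proof -
      have "cnj x ^ (?d - i) = inverse (x ^ (?d - i))" by (simp add: cnj_circ[OF x] power_inverse)
      also have "x ^ (?d - i) = x ^ ?d / x ^ i" using x0 i by (simp add: power_diff)
      finally show ?thesis by simp
    qed
    ultimately show "coeff p i * (Q ^ (?d - i) * cnj x ^ (?d - i)) = Q ^ ?d / x ^ ?d * (coeff p i * (x / Q) ^ i)"
      by (simp add: power_divide field_simps)
  qed
  also have "\<dots> = Q ^ ?d / x ^ ?d * poly p (x / Q)"
    by (simp add: sum_distrib_left poly_altdef)
  finally show ?thesis .
qed

context setting
begin

abbreviation Q :: complex where "Q \<equiv> complex_of_real q"

lemma Q0: "Q \<noteq> 0" using q by simp
lemma Qr: "cnj Q = Q" by simp

lemma poly_sc: "poly (p \<circ>\<^sub>p [:0, Q:]) x = poly p (Q * x)"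
  by (simp add: poly_pcompose mult.commute)

lemma degree_sc: "degree (p \<circ>\<^sub>p [:0, Q:]) = degree p"
  using Q0 by (simp add: degree_pcompose)

lemma coeff_sc: "coeff (p \<circ>\<^sub>p [:0, Q:]) i = Q ^ i * coeff p i"
  by (rule coeff_pcompose_linear)

definition qn :: "nat \<Rightarrow> complex" where "qn k = (1 - Q ^ k) / (1 - Q)"

lemma cs_pstar_sc: "cs (\<lambda>x. pstar p (Q * x))"
  by (simp add: pstar_revk[abs_def]) (intro continuous_intros)

lemma cs_poly_sc: "cs (\<lambda>x. poly p (Q * x))"
  by (intro continuous_intros)

lemma partB:
  "CI (\<lambda>\<zeta>. w \<zeta> * (poly (\<phi> k) \<zeta> * cnj (pstar (\<phi> k) (Q * \<zeta>)))) = - \<i> * ac (Suc k) / kp (Suc k)"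
proof -
  define g where "g = revk k (\<phi> k) \<circ>\<^sub>p [:0, Q:]"
  have pg: "pstar (\<phi> k) (Q * x) = poly g x" for x
    by (simp add: g_def poly_sc pstar_revk phi_deg)
  have dg: "degree g \<le> k" using degree_revk[of k "\<phi> k"] by (simp add: g_def degree_sc)
  have "coeff g 0 = Q ^ 0 * coeff (revk k (\<phi> k)) 0" by (simp only: g_def coeff_sc)
  then have cg: "coeff g 0 = kp k" using kp_real[of k] phi_deg[of k] by (simp add: coeff_revk)
  have "CI (\<lambda>\<zeta>. w \<zeta> * (poly (\<phi> k) \<zeta> * cnj (pstar (\<phi> k) (Q * \<zeta>))))
      = CI (\<lambda>\<zeta>. \<i> * ((\<zeta> * poly (\<phi> k) \<zeta>) * cnj (poly g \<zeta>) * w \<zeta> / (\<i> * \<zeta>)))"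
    by (rule CI_cong) (auto simp: pg)
  also have "\<dots> = \<i> * ip (\<lambda>\<zeta>. \<zeta> * poly (\<phi> k) \<zeta>) (poly g)"
    unfolding ip_def by (rule CI_lmul) (intro ipc cs_x cs_poly)
  also have "ip (\<lambda>\<zeta>. \<zeta> * poly (\<phi> k) \<zeta>) (poly g) = - ac (Suc k) / kp (Suc k)"
  proof -
    have "kp k * ip (\<lambda>\<zeta>. \<zeta> * poly (\<phi> k) \<zeta>) (poly g) = ip (\<lambda>\<zeta>. kp k * (\<zeta> * poly (\<phi> k) \<zeta>)) (poly g)"
      by (simp add: ip_mul1 cs_x cs_poly)
    also have "\<dots> = ip (\<lambda>\<zeta>. kp (Suc k) * poly (\<phi> (Suc k)) \<zeta> - ac (Suc k) * pstar (\<phi> (Suc k)) \<zeta>) (poly g)"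
      using SI1[of "Suc k"] by simp
    also have "\<dots> = kp (Suc k) * ip (poly (\<phi> (Suc k))) (poly g) - ac (Suc k) * ip (pstar (\<phi> (Suc k))) (poly g)"
      by (simp add: ip_diff1 ip_mul1 cs_poly cs_pstar continuous_intros)
    also have "ip (poly (\<phi> (Suc k))) (poly g) = 0" using dg by (intro O1) auto
    also have "ip (pstar (\<phi> (Suc k))) (poly g) = cnj (coeff g 0) / kp (Suc k)" using dg by (intro O3) auto
    finally have "kp k * ip (\<lambda>\<zeta>. \<zeta> * poly (\<phi> k) \<zeta>) (poly g) = kp k * (- ac (Suc k) / kp (Suc k))"
      using cg kp_real[of k] by simp
    then show ?thesis by (rule mult_left_cancel[OF kp_nz, THEN iffD1])
  qed
  finally show ?thesis by simp
qed


lemma Q1: "1 - Q \<noteq> 0" using q by simp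

lemma not0_cann: "0 \<notin> cannulus q" using q by (auto simp: cannulus_def)
lemma not0_ann: "0 \<notin> annulus q" using q by (auto simp: annulus_def)

lemma cs_wQ: "cs (\<lambda>x. w (Q * x))"
proof (rule continuous_on_compose2[OF w_cont])
  show "continuous_on (sphere 0 1) (\<lambda>x. Q * x)" by (intro continuous_intros)
  show "(\<lambda>x. Q * x) ` sphere 0 1 \<subseteq> cannulus q" using q by (auto simp: cannulus_def norm_mult)
qed

lemma cs_pstar': "cs (\<lambda>x. pstar p x)"
  using cs_pstar[of p] by simp

lemma partA:
  "CI (\<lambda>\<zeta>. u \<zeta> * w \<zeta> * (poly (\<phi> k) \<zeta> * cnj (pstar (\<phi> k) (Q * \<zeta>)))) = - \<i> * Q * qn k * ac k / kp k"
proof -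
  let ?P = "poly (\<phi> k)"
  define Lr where "Lr \<zeta> = Q ^ k / \<zeta> ^ k * ?P (\<zeta> / Q)" for \<zeta>
  define f where "f \<zeta> = u \<zeta> * w \<zeta> * (?P \<zeta> * Lr \<zeta>)" for \<zeta>
  define h where "h \<zeta> = w \<zeta> * (?P \<zeta> * (Q ^ k / \<zeta> ^ Suc k) * ?P (\<zeta> / Q))" for \<zeta>
  define A where "A x = w x * (?P (Q * x) * ?P x / x ^ Suc k)" for x
  define B where "B x = w (Q * x) * (?P (Q * x) * ?P x / x ^ Suc k)" for x
  have Lr: "cnj (pstar (\<phi> k) (Q * \<zeta>)) = Lr \<zeta>" if "norm \<zeta> = 1" for \<zeta>
    using pstar_scaled_circ[OF that Q0 Qr, of "\<phi> k"] by (simp add: Lr_def phi_deg)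
  have "CI (\<lambda>\<zeta>. u \<zeta> * w \<zeta> * (?P \<zeta> * cnj (pstar (\<phi> k) (Q * \<zeta>)))) = CI f"
    by (rule CI_cong) (simp add: f_def Lr)
  also have "CI f = contour_integral (circlepath 0 q) f"
    unfolding CI_def
  proof (rule annulus_cauchy[OF q])
    show "f holomorphic_on annulus q" unfolding f_def Lr_def using not0_ann Q0
      by (intro holomorphic_intros u_hol w_hol) auto
    show "continuous_on (cannulus q) f" unfolding f_def Lr_def using not0_cann Q0
      by (intro continuous_intros u_cont w_cont) auto
  qed
  also have "\<dots> = CI (\<lambda>x. Q * f (Q * x))" unfolding CI_def by (rule circ_scale)
  also have "\<dots> = CI (\<lambda>x. (- Q / (1 - Q)) * (A x - B x))"
  proof (rule CI_cong)
    fix x :: complex assume x: "norm x = 1"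
    then have x0: "x \<noteq> 0" by auto
    have uw: "u (Q * x) * w (Q * x) = - ((w x - w (Q * x)) / (x - Q * x))"
      using u_def[OF x] by (simp add: Dq_def)
    have "Lr (Q * x) = ?P x / x ^ k" using Q0 x0 by (simp add: Lr_def power_mult_distrib)
    then have "Q * f (Q * x) = Q * (u (Q * x) * w (Q * x)) * (?P (Q * x) * (?P x / x ^ k))"
      by (simp add: f_def mult_ac)
    also have "\<dots> = (- Q / (1 - Q)) * (A x - B x)"
      unfolding uw A_def B_def using x0 Q1 by (simp add: field_simps)
    finally show "Q * f (Q * x) = (- Q / (1 - Q)) * (A x - B x)" .
  qed
  also have "\<dots> = (- Q / (1 - Q)) * (CI A - CI B)"
  proof -
    have cA: "cs A" unfolding A_def using wc by (intro continuous_intros) auto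
    have cB: "cs B" unfolding B_def using cs_wQ by (intro continuous_intros) auto
    have "CI (\<lambda>x. (- Q / (1 - Q)) * (A x - B x)) = (- Q / (1 - Q)) * CI (\<lambda>x. A x - B x)"
      by (rule CI_lmul) (intro continuous_intros cA cB)
    also have "CI (\<lambda>x. A x - B x) = CI A - CI B" by (rule CI_diff[OF cA cB])
    finally show ?thesis .
  qed
  also have "CI A = \<i> * (ac k / kp k)"
  proof -
    define g1 where "g1 = \<phi> k \<circ>\<^sub>p [:0, Q:]"
    have pg1: "?P (Q * x) = poly g1 x" for x by (simp add: g1_def poly_sc)
    have "CI A = CI (\<lambda>x. \<i> * (poly g1 x * cnj (pstar (\<phi> k) x) * w x / (\<i> * x)))"
    proof (rule CI_cong)
      fix x :: complex assume x: "norm x = 1"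
      then have x0: "x \<noteq> 0" by auto
      have "cnj (pstar (\<phi> k) x) = ?P x / x ^ k"
        using pstar_circ[OF x] cnj_circ[OF x] by (simp add: power_inverse divide_inverse mult.commute)
      then show "A x = \<i> * (poly g1 x * cnj (pstar (\<phi> k) x) * w x / (\<i> * x))"
        unfolding A_def pg1 using x0 by (simp add: field_simps)
    qed
    also have "\<dots> = \<i> * ip (poly g1) (pstar (\<phi> k))"
      unfolding ip_def by (rule CI_lmul) (intro ipc cs_poly cs_pstar)
    also have "ip (poly g1) (pstar (\<phi> k)) = cnj (ip (pstar (\<phi> k)) (poly g1))" by (rule ip_sym)
    also have "ip (pstar (\<phi> k)) (poly g1) = cnj (coeff g1 0) / kp k"
      by (rule O3) (simp add: g1_def degree_sc phi_deg)
    also have "coeff g1 0 = ac k"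
    proof -
      have "coeff g1 0 = Q ^ 0 * coeff (\<phi> k) 0" by (simp only: g1_def coeff_sc)
      then show ?thesis by (simp add: ac_coeff)
    qed
    finally show ?thesis using kp_real[of k] by simp
  qed
  also have "CI B = \<i> * (Q ^ k * ac k / kp k)"
  proof -
    have "CI B = CI (\<lambda>x. Q * h (Q * x))"
    proof (rule CI_cong)
      fix x :: complex assume x: "norm x = 1"
      then have x0: "x \<noteq> 0" by auto
      show "B x = Q * h (Q * x)" unfolding B_def h_def using x0 Q0
        by (simp add: field_simps power_mult_distrib)
    qed
    also have "\<dots> = contour_integral (circlepath 0 q) h" unfolding CI_def by (rule circ_scale[symmetric])
    also have "\<dots> = CI h" unfolding CI_def
    proof (rule annulus_cauchy[OF q, symmetric])
      show "h holomorphic_on annulus q" unfolding h_def using not0_ann Q0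
        by (intro holomorphic_intros w_hol) auto
      show "continuous_on (cannulus q) h" unfolding h_def using not0_cann Q0
        by (intro continuous_intros w_cont) auto
    qed
    also have "\<dots> = CI (\<lambda>x. \<i> * (?P x * cnj (pstar (\<phi> k) (Q * x)) * w x / (\<i> * x)))"
    proof (rule CI_cong)
      fix x :: complex assume x: "norm x = 1"
      then have x0: "x \<noteq> 0" by auto
      show "h x = \<i> * (?P x * cnj (pstar (\<phi> k) (Q * x)) * w x / (\<i> * x))"
        unfolding Lr[OF x] h_def Lr_def using x0 by (simp add: field_simps)
    qed
    also have "\<dots> = \<i> * ip ?P (\<lambda>x. pstar (\<phi> k) (Q * x))"
      unfolding ip_def by (rule CI_lmul) (intro ipc cs_poly cs_pstar_sc)
    also have "ip ?P (\<lambda>x. pstar (\<phi> k) (Q * x)) = Q ^ k * ac k / kp k"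
    proof -
      define g where "g = revk k (\<phi> k) \<circ>\<^sub>p [:0, Q:]"
      have pg: "(\<lambda>x. pstar (\<phi> k) (Q * x)) = poly g"
        by (rule ext) (simp add: g_def poly_sc pstar_revk phi_deg)
      have "ip ?P (poly g) = cnj (coeff g k) / kp k"
        by (rule O2) (simp add: g_def degree_sc degree_revk)
      also have "coeff g k = Q ^ k * cnj (ac k)"
      proof -
        have "coeff g k = Q ^ k * coeff (revk k (\<phi> k)) k" by (simp only: g_def coeff_sc)
        then show ?thesis by (simp add: coeff_revk ac_coeff)
      qed
      finally show ?thesis unfolding pg by simp
    qed
    finally show ?thesis .
  qed
  finally show ?thesis using Q1 kp_nz[of k] by (simp add: qn_def field_simps)
qed

end


lemma step_alg:
  fixes L1 L2 L3 L4 Gk Gk1 kA kB kC kD aB aC aD Q z y uy qm qk A2 A3 B1 B4 :: complex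
  assumes nz: "kA \<noteq> 0" "kB \<noteq> 0" "kC \<noteq> 0" "kD \<noteq> 0" "aB \<noteq> 0" "aC \<noteq> 0" "aD \<noteq> 0" "Q \<noteq> 0" "z \<noteq> 0"
    and y: "y = Q * z"
    and qk: "qk = 1 + Q * qm"
    and R: "- (1/Q) * L1 - (kC / (Q * aC) + kD * z / aD) * L2 + (kB / aB + kC * z / aC) * L3 + L4
            = (1/Q) * (kD / aD * Gk - kC / aC * Gk1)"
    and Gk: "Gk = - \<i> * Q * qk * aC / kC + \<i> * uy * aD / kD"
    and Gk1: "Gk1 = - \<i> * Q * qm * aB / kB + \<i> * uy * aC / kC"
    and B1: "B1 = - \<i> * L1" and B4: "B4 = - \<i> * L4"
    and A2: "A2 = kB / kC * qk + \<i> * kB / aC * z * L2"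
    and A3: "A3 = kA / kB * qm + \<i> * kA / aB * z * L3"
  shows "B1 / Q - (kC / (kB * y) + kD * aC / (kB * aD)) * A2 + (kB / (kA * z) + kC * aB / (kA * aC)) * A3 - B4 + 1 / y = 0"
proof -
  have "B1 / Q - (kC / (kB * y) + kD * aC / (kB * aD)) * A2 + (kB / (kA * z) + kC * aB / (kA * aC)) * A3 - B4 + 1 / y
      = \<i> * (- (1/Q) * L1 - (kC / (Q * aC) + kD * z / aD) * L2 + (kB / aB + kC * z / aC) * L3 + L4)
        + (- qk / y - kD * aC * qk / (kC * aD) + qm / z + kC * aB * qm / (kB * aC) + 1 / y)"
    unfolding B1 B4 A2 A3 y using nz
    using nz by (simp add: field_simps)
  also have "\<dots> = 0"
    unfolding R Gk Gk1 qk y using nz by (simp add: field_simps)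
  finally show ?thesis .
qed



lemma pw_step:
  fixes P1 P PS R S P0 R0 S0 R1 S1 kB kC kD aB aC aD cC Q z x :: complex
  assumes nz: "kB \<noteq> 0" "kC \<noteq> 0" "kD \<noteq> 0" "aC \<noteq> 0" "aD \<noteq> 0" "Q \<noteq> 0" "x \<noteq> 0"
    and i: "kC * R = kD * R1 - aD * S1"
    and ii: "kC * P1 = kD * (x * P) + aD * PS"
    and iii: "kB * (x * P0) = kC * P - aC * PS"
    and iv: "kB * R0 = kC * R - aC * S"
    and v: "kB * (Q / x) * S0 = kC * S - cC * R"
    and vi: "kC * kC = kB * kB + aC * cC"
  shows "- (1/Q) * (P1 * (S1 - kD / aD * R1)) - (kC / (Q * aC) + kD * z / aD) * (P * R)
         + (kB / aB + kC * z / aC) * (P0 * R0) + P0 * (S0 - kB / aB * R0)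
       = ((x - Q * z) / Q) * (kD / aD * (P * R) - kC / aC * (P0 * R0))"
proof -
  have cC: "cC = (kC * kC - kB * kB) / aC" using vi nz by (simp add: field_simps)
  have "S1 - kD / aD * R1 = (aD * S1 - kD * R1) / aD" using nz by (simp add: field_simps)
  also have "aD * S1 - kD * R1 = - (kC * R)" by (simp add: i)
  finally have e1: "S1 - kD / aD * R1 = - kC / aD * R" by simp
  have e2: "P1 = (kD * (x * P) + aD * PS) / kC" using ii nz by (simp add: field_simps)
  have e3: "P0 = (kC * P - aC * PS) / (kB * x)" using iii nz by (simp add: field_simps)
  have e4: "R0 = (kC * R - aC * S) / kB" using iv nz by (simp add: field_simps)
  have e5: "S0 = x * (kC * S - cC * R) / (kB * Q)" using v nz by (simp add: field_simps)
  have "- (1/Q) * (P1 * (S1 - kD / aD * R1)) - (kC / (Q * aC) + kD * z / aD) * (P * R)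
         + (kB / aB + kC * z / aC) * (P0 * R0) + P0 * (S0 - kB / aB * R0)
       = - (1/Q) * (P1 * (S1 - kD / aD * R1)) - (kC / (Q * aC) + kD * z / aD) * (P * R)
         + (kC * z / aC) * (P0 * R0) + P0 * S0"
    by (simp add: algebra_simps)
  also have "\<dots> = ((x - Q * z) / Q) * (kD / aD * (P * R) - kC / aC * (P0 * R0))"
    unfolding e1 e2 e3 e4 e5 cC using nz by (simp add: field_simps)
  finally show ?thesis .
qed

lemma pw_base:
  fixes P2 R2 S2 P PS R S k1 k2 a1 ca1 a2 Q z x :: complex
  assumes nz: "k1 \<noteq> 0" "a1 \<noteq> 0" "a2 \<noteq> 0" "Q \<noteq> 0" "x \<noteq> 0"
    and i: "k1 * R = k2 * R2 - a2 * S2"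
    and ii: "k1 * P2 = k2 * (x * P) + a2 * PS"
    and P: "P = a1 + k1 * x" and PS: "PS = ca1 * x + k1"
    and R: "R = a1 * (Q / x) + k1" and S: "S = ca1 + k1 * (Q / x)"
    and vi: "k1 * k1 = 1 + a1 * ca1"
  shows "- (1/Q) * (P2 * (S2 - k2 / a2 * R2)) - (1/Q) * (P * (S - k1 / a1 * R))
         - (k1 / (Q * a1) + k2 * z / a2) * (P * R) - (1 - Q) / Q
       = ((x - Q * z) / Q) * (k2 / a2 * (P * R))"
proof -
  have "S2 - k2 / a2 * R2 = (a2 * S2 - k2 * R2) / a2" using nz by (simp add: field_simps)
  also have "a2 * S2 - k2 * R2 = - (k1 * R)" by (simp add: i)
  finally have e1: "S2 - k2 / a2 * R2 = - k1 / a2 * R" by simp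
  have e2: "P2 = (k2 * (x * P) + a2 * PS) / k1" using ii nz by (simp add: field_simps)
  have ca: "ca1 = (k1 * k1 - 1) / a1" using vi nz by (simp add: field_simps)
  show ?thesis
    unfolding e1 e2 P PS R S ca using nz by (simp add: field_simps)
qed


context setting
begin

definition Lam :: "complex \<Rightarrow> (complex \<Rightarrow> complex) \<Rightarrow> complex" where
  "Lam y F = CI (\<lambda>\<zeta>. (u \<zeta> - u y) / (\<zeta> - y) * w \<zeta> * F \<zeta>)"

definition RR :: "nat \<Rightarrow> complex \<Rightarrow> complex" where "RR j \<zeta> = cnj (pstar (\<phi> j) (Q * \<zeta>))"
definition SS :: "nat \<Rightarrow> complex \<Rightarrow> complex" where "SS j \<zeta> = cnj (poly (\<phi> j) (Q * \<zeta>))"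
definition PR :: "nat \<Rightarrow> complex \<Rightarrow> complex" where "PR j \<zeta> = poly (\<phi> j) \<zeta> * RR j \<zeta>"
definition FB :: "nat \<Rightarrow> complex \<Rightarrow> complex" where
  "FB j \<zeta> = poly (\<phi> j) \<zeta> * (SS j \<zeta> - kp j / ac j * RR j \<zeta>)"

lemma cs_RR: "cs (RR j)"
  unfolding RR_def by (intro continuous_intros cs_pstar_sc[unfolded o_def])
lemma cs_SS: "cs (SS j)"
  unfolding SS_def by (intro continuous_intros)
lemma cs_PR: "cs (PR j)"
  unfolding PR_def using cs_RR by (intro continuous_intros) auto
lemma cs_FB: "cs (FB j)"
  unfolding FB_def using cs_RR cs_SS by (intro continuous_intros) auto

lemma cs_K: assumes "y \<in> annulus q" shows "cs (\<lambda>\<zeta>. (u \<zeta> - u y) / (\<zeta> - y) * w \<zeta>)"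
proof -
  have "\<zeta> \<noteq> y" if "\<zeta> \<in> sphere 0 1" for \<zeta> using assms that by (auto simp: annulus_def)
  then show ?thesis using uc wc by (intro continuous_intros) auto
qed

lemma Lam_cong: "(\<And>\<zeta>. norm \<zeta> = 1 \<Longrightarrow> F \<zeta> = G \<zeta>) \<Longrightarrow> Lam y F = Lam y G"
  unfolding Lam_def by (rule CI_cong) simp

lemma lin4_aux: "(K::complex) * (c1 * a + c2 * b + c3 * c + c4 * d) = c1 * (K * a) + c2 * (K * b) + c3 * (K * c) + c4 * (K * d)"
  by (simp add: algebra_simps)

lemma Lam_lin4:
  assumes y: "y \<in> annulus q" and c: "cs F1" "cs F2" "cs F3" "cs F4"
  shows "Lam y (\<lambda>\<zeta>. c1 * F1 \<zeta> + c2 * F2 \<zeta> + c3 * F3 \<zeta> + c4 * F4 \<zeta>)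
       = c1 * Lam y F1 + c2 * Lam y F2 + c3 * Lam y F3 + c4 * Lam y F4"
proof -
  let ?K = "\<lambda>\<zeta>. (u \<zeta> - u y) / (\<zeta> - y) * w \<zeta>"
  have k: "cs ?K" by (rule cs_K[OF y])
  have ci: "cs (\<lambda>\<zeta>. ?K \<zeta> * F \<zeta>)" if "cs F" for F by (rule continuous_on_mult[OF k that])
  have "Lam y (\<lambda>\<zeta>. c1 * F1 \<zeta> + c2 * F2 \<zeta> + c3 * F3 \<zeta> + c4 * F4 \<zeta>)
      = CI (\<lambda>\<zeta>. c1 * (?K \<zeta> * F1 \<zeta>) + c2 * (?K \<zeta> * F2 \<zeta>) + c3 * (?K \<zeta> * F3 \<zeta>) + c4 * (?K \<zeta> * F4 \<zeta>))"
    unfolding Lam_def by (rule CI_cong) (rule lin4_aux)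
  also have "\<dots> = CI (\<lambda>\<zeta>. c1 * (?K \<zeta> * F1 \<zeta>) + c2 * (?K \<zeta> * F2 \<zeta>) + c3 * (?K \<zeta> * F3 \<zeta>)) + CI (\<lambda>\<zeta>. c4 * (?K \<zeta> * F4 \<zeta>))"
    using c by (intro CI_add continuous_intros ci)
  also have "CI (\<lambda>\<zeta>. c1 * (?K \<zeta> * F1 \<zeta>) + c2 * (?K \<zeta> * F2 \<zeta>) + c3 * (?K \<zeta> * F3 \<zeta>))
     = CI (\<lambda>\<zeta>. c1 * (?K \<zeta> * F1 \<zeta>) + c2 * (?K \<zeta> * F2 \<zeta>)) + CI (\<lambda>\<zeta>. c3 * (?K \<zeta> * F3 \<zeta>))"
    using c by (intro CI_add continuous_intros ci)
  also have "CI (\<lambda>\<zeta>. c1 * (?K \<zeta> * F1 \<zeta>) + c2 * (?K \<zeta> * F2 \<zeta>))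
     = CI (\<lambda>\<zeta>. c1 * (?K \<zeta> * F1 \<zeta>)) + CI (\<lambda>\<zeta>. c2 * (?K \<zeta> * F2 \<zeta>))"
    using c by (intro CI_add continuous_intros ci)
  also have "CI (\<lambda>\<zeta>. c1 * (?K \<zeta> * F1 \<zeta>)) = c1 * Lam y F1"
    unfolding Lam_def using c by (intro CI_lmul ci)
  also have "CI (\<lambda>\<zeta>. c2 * (?K \<zeta> * F2 \<zeta>)) = c2 * Lam y F2"
    unfolding Lam_def using c by (intro CI_lmul ci)
  also have "CI (\<lambda>\<zeta>. c3 * (?K \<zeta> * F3 \<zeta>)) = c3 * Lam y F3"
    unfolding Lam_def using c by (intro CI_lmul ci)
  also have "CI (\<lambda>\<zeta>. c4 * (?K \<zeta> * F4 \<zeta>)) = c4 * Lam y F4"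
    unfolding Lam_def using c by (intro CI_lmul ci)
  finally show ?thesis .
qed

lemma Lam_lin2:
  assumes y: "y \<in> annulus q" and c: "cs F1" "cs F2"
  shows "Lam y (\<lambda>\<zeta>. c1 * F1 \<zeta> + c2 * F2 \<zeta>) = c1 * Lam y F1 + c2 * Lam y F2"
  using Lam_lin4[OF y c c, of c1 c2 0 0] by simp

lemma KL:
  assumes y: "y \<in> annulus q"
  shows "Lam y (\<lambda>\<zeta>. (\<zeta> - y) * PR k \<zeta>) = - \<i> * Q * qn k * ac k / kp k + u y * (\<i> * ac (Suc k) / kp (Suc k))"
proof -
  let ?G = "\<lambda>\<zeta>. poly (\<phi> k) \<zeta> * cnj (pstar (\<phi> k) (Q * \<zeta>))"
  have cG: "cs ?G" using cs_PR[of k] by (simp add: PR_def RR_def)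
  have "Lam y (\<lambda>\<zeta>. (\<zeta> - y) * PR k \<zeta>) = CI (\<lambda>\<zeta>. u \<zeta> * w \<zeta> * ?G \<zeta> - u y * (w \<zeta> * ?G \<zeta>))"
    unfolding Lam_def
  proof (rule CI_cong)
    fix \<zeta> :: complex assume "norm \<zeta> = 1"
    then have "\<zeta> - y \<noteq> 0" using y by (auto simp: annulus_def)
    then show "(u \<zeta> - u y) / (\<zeta> - y) * w \<zeta> * ((\<zeta> - y) * PR k \<zeta>) = u \<zeta> * w \<zeta> * ?G \<zeta> - u y * (w \<zeta> * ?G \<zeta>)"
      by (simp add: PR_def RR_def field_simps)
  qed
  also have "\<dots> = CI (\<lambda>\<zeta>. u \<zeta> * w \<zeta> * ?G \<zeta>) - CI (\<lambda>\<zeta>. u y * (w \<zeta> * ?G \<zeta>))"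
    by (intro CI_diff continuous_intros uc wc cs_pstar_sc)
  also have "CI (\<lambda>\<zeta>. u y * (w \<zeta> * ?G \<zeta>)) = u y * CI (\<lambda>\<zeta>. w \<zeta> * ?G \<zeta>)"
    by (intro CI_lmul continuous_intros uc wc cs_pstar_sc)
  also have "CI (\<lambda>\<zeta>. u \<zeta> * w \<zeta> * ?G \<zeta>) = - \<i> * Q * qn k * ac k / kp k" by (rule partA)
  also have "CI (\<lambda>\<zeta>. w \<zeta> * ?G \<zeta>) = - \<i> * ac (Suc k) / kp (Suc k)" by (rule partB)
  finally show ?thesis by simp
qed

lemma repA: "coefA q w u \<phi> k z = kp (k-1) / kp k * qn k + \<i> * kp (k-1) / ac k * z * Lam (Q * z) (PR k)"
  unfolding coefA_def kap_def qn_def Lam_def CI_def PR_def RR_def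
  by (simp add: mult_ac)

lemma repB: "coefB q w u \<phi> k z = - \<i> * Lam (Q * z) (FB k)"
  unfolding coefB_def kap_def Lam_def CI_def FB_def RR_def SS_def
  by (simp add: mult_ac)

lemma aux_i: "(x::complex) \<noteq> 0 \<Longrightarrow> x * K * W / (\<i> * x) = - \<i> * (K * W * 1)"
  by (simp add: field_simps)

lemma repM: assumes y: "Q * z \<in> annulus q" shows "coefM1 q w u z = - \<i> * Lam (Q * z) (\<lambda>_. 1)"
proof -
  have "coefM1 q w u z = CI (\<lambda>\<zeta>. - \<i> * ((u \<zeta> - u (Q * z)) / (\<zeta> - Q * z) * w \<zeta> * 1))"
    unfolding coefM1_def CI_def
    by (rule contour_integral_eq) (rule aux_i, auto)
  also have "\<dots> = - \<i> * Lam (Q * z) (\<lambda>_. 1)"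
    unfolding Lam_def by (intro CI_lmul) (simp only: mult_1_right cs_K[OF y])
  finally show ?thesis .
qed

end


definition LHSf :: "(nat \<Rightarrow> complex) \<Rightarrow> (nat \<Rightarrow> complex) \<Rightarrow> (nat \<Rightarrow> complex) \<Rightarrow> (nat \<Rightarrow> complex) \<Rightarrow> complex \<Rightarrow> nat \<Rightarrow> complex" where
  "LHSf A B kp ac z n = B n + B (n - 1) - kp (n - 1) / kp (n - 2) * A (n - 1) / z
           - kp n / kp (n - 2) * (ac (n - 1) / ac n) * A (n - 1)"

definition RHSf :: "(nat \<Rightarrow> complex) \<Rightarrow> (nat \<Rightarrow> complex) \<Rightarrow> (nat \<Rightarrow> complex) \<Rightarrow> complex \<Rightarrow> complex \<Rightarrow> complex \<Rightarrow> complex \<Rightarrow> nat \<Rightarrow> complex" where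
  "RHSf A B kp M uy Q z n = - of_nat (n - 1) / (Q * z) - uy / Q
           - (1 - Q) / Q * ((B 1 + M) + (\<Sum>j = 1..n - 1. B (j + 1) - kp j / kp (j - 1) * A j / z))"

lemma lin_aux: "a - b + c + d = (0::complex) \<Longrightarrow> a = b - c - d"
  by (simp add: algebra_simps)

lemma frame:
  fixes A B kp ac :: "nat \<Rightarrow> complex" and M uy Q z :: complex
  assumes nz: "Q \<noteq> 0" "z \<noteq> 0" "\<And>k. kp k \<noteq> 0"
    and base: "LHSf A B kp ac z 2 = RHSf A B kp M uy Q z 2"
    and step: "\<And>k. 2 \<le> k \<Longrightarrow> k < N \<Longrightarrow>
       B (Suc k) / Q - (kp k / (kp (k-1) * (Q * z)) + kp (Suc k) * ac k / (kp (k-1) * ac (Suc k))) * A k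
       + (kp (k-1) / (kp (k-2) * z) + kp k * ac (k-1) / (kp (k-2) * ac k)) * A (k-1) - B (k-1) + 1 / (Q * z) = 0"
  shows "2 \<le> n \<Longrightarrow> n \<le> N \<Longrightarrow> LHSf A B kp ac z n = RHSf A B kp M uy Q z n"
proof (induction n rule: nat_induct_at_least)
  case base
  then show ?case using assms(4) by simp
next
  case (Suc m)
  have IH: "LHSf A B kp ac z m = RHSf A B kp M uy Q z m" using Suc by simp
  have S: "B (Suc m) / Q - (kp m / (kp (m-1) * (Q * z)) + kp (Suc m) * ac m / (kp (m-1) * ac (Suc m))) * A m
       + (kp (m-1) / (kp (m-2) * z) + kp m * ac (m-1) / (kp (m-2) * ac m)) * A (m-1) - B (m-1) + 1 / (Q * z) = 0"
    using step[of m] Suc by simp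
  have L: "LHSf A B kp ac z (Suc m) = LHSf A B kp ac z m - 1 / (Q * z) - (1 - Q) / Q * (B (m + 1) - kp m / kp (m - 1) * A m / z)"
  proof -
    have "LHSf A B kp ac z (Suc m) - LHSf A B kp ac z m + 1 / (Q * z) + (1 - Q) / Q * (B (m + 1) - kp m / kp (m - 1) * A m / z)
       = B (Suc m) / Q - (kp m / (kp (m-1) * (Q * z)) + kp (Suc m) * ac m / (kp (m-1) * ac (Suc m))) * A m
       + (kp (m-1) / (kp (m-2) * z) + kp m * ac (m-1) / (kp (m-2) * ac m)) * A (m-1) - B (m-1) + 1 / (Q * z)"
      unfolding LHSf_def using nz by (simp add: field_simps)
    from trans[OF this S] show ?thesis by (rule lin_aux)
  qed
  have R: "RHSf A B kp M uy Q z (Suc m) = RHSf A B kp M uy Q z m - 1 / (Q * z) - (1 - Q) / Q * (B (m + 1) - kp m / kp (m - 1) * A m / z)"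
  proof -
    have sm: "{1..Suc m - 1} = insert m {1..m - 1}" using Suc.hyps by auto
    define S1 where "S1 = (\<Sum>j = 1..Suc m - 1. B (j + 1) - kp j / kp (j - 1) * A j / z)"
    define S0 where "S0 = (\<Sum>j = 1..m - 1. B (j + 1) - kp j / kp (j - 1) * A j / z)"
    define T where "T = B (m + 1) - kp m / kp (m - 1) * A m / z"
    have S10: "S1 = T + S0"
      unfolding S1_def S0_def T_def sm by (subst sum.insert) auto
    have on: "of_nat (Suc m - 1) = (of_nat (m - 1) + 1 :: complex)" using Suc.hyps by (simp add: of_nat_diff)
    have "RHSf A B kp M uy Q z (Suc m) = - of_nat (Suc m - 1) / (Q * z) - uy / Q - (1 - Q) / Q * ((B 1 + M) + S1)"
      unfolding RHSf_def S1_def by simp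
    also have "\<dots> = (- of_nat (m - 1) / (Q * z) - uy / Q - (1 - Q) / Q * ((B 1 + M) + S0)) - 1 / (Q * z) - (1 - Q) / Q * T"
      unfolding on S10 by (simp add: algebra_simps add_divide_distrib diff_divide_distrib)
    also have "- of_nat (m - 1) / (Q * z) - uy / Q - (1 - Q) / Q * ((B 1 + M) + S0) = RHSf A B kp M uy Q z m"
      unfolding RHSf_def S0_def by simp
    finally show ?thesis unfolding T_def .
  qed
  show ?case using IH L R by simp
qed

lemma base_alg:
  fixes A B kp ac :: "nat \<Rightarrow> complex" and M uy Q z LB2 LB1 LPR1 L0 G1 :: complex
  assumes nz: "Q \<noteq> 0" "z \<noteq> 0" "kp 1 \<noteq> 0" "kp 2 \<noteq> 0" "ac 1 \<noteq> 0" "ac 2 \<noteq> 0"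
    and k0: "kp 0 = 1"
    and B2: "B 2 = - \<i> * LB2" and B1: "B 1 = - \<i> * LB1"
    and A1: "A 1 = kp 0 / kp 1 * 1 + \<i> * kp 0 / ac 1 * z * LPR1"
    and M: "M = - \<i> * L0"
    and R: "- (1/Q) * LB2 + - (1/Q) * LB1 + - (kp 1 / (Q * ac 1) + kp 2 * z / ac 2) * LPR1 + - ((1 - Q) / Q) * L0
            = 1 / Q * (kp 2 / ac 2 * G1)"
    and G1: "G1 = - \<i> * Q * 1 * ac 1 / kp 1 + uy * (\<i> * ac 2 / kp 2)"
  shows "LHSf A B kp ac z 2 = RHSf A B kp M uy Q z 2"
proof -
  have "LHSf A B kp ac z 2 - RHSf A B kp M uy Q z 2
      = \<i> * (- (1/Q) * LB2 + - (1/Q) * LB1 + - (kp 1 / (Q * ac 1) + kp 2 * z / ac 2) * LPR1 + - ((1 - Q) / Q) * L0)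
        + (- kp 2 * ac 1 / (kp 1 * ac 2) + uy / Q)"
  proof -
    have l: "LHSf A B kp ac z 2 = B 2 + B 1 - kp 1 / kp 0 * A 1 / z - kp 2 / kp 0 * (ac 1 / ac 2) * A 1"
      by (simp add: LHSf_def)
    have r: "RHSf A B kp M uy Q z 2 = - 1 / (Q * z) - uy / Q - (1 - Q) / Q * ((B 1 + M) + (B 2 - kp 1 / kp 0 * A 1 / z))"
      by (simp add: RHSf_def numeral_2_eq_2)
    show ?thesis unfolding l r unfolding B2 B1 A1 M k0 using nz by (simp add: field_simps)
  qed
  also have "\<dots> = 0" unfolding R G1 using nz by (simp add: field_simps)
  finally show ?thesis by simp
qed


lemma step_alg2:
  fixes L1 L2 L3 L4 Gk Gk1 kA kB kC kD aB aC aD Q z uy qm qk A2 A3 B1 B4 :: complex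
  assumes nz: "kA \<noteq> 0" "kB \<noteq> 0" "kC \<noteq> 0" "kD \<noteq> 0" "aB \<noteq> 0" "aC \<noteq> 0" "aD \<noteq> 0" "Q \<noteq> 0" "z \<noteq> 0"
    and qk: "qk = 1 + Q * qm"
    and R: "- (1/Q) * L1 + - (kC / (Q * aC) + kD * z / aD) * L2 + (kB / aB + kC * z / aC) * L3 + 1 * L4
            = kD / aD / Q * Gk + - (kC / aC / Q) * Gk1"
    and Gk: "Gk = - \<i> * Q * qk * aC / kC + uy * (\<i> * aD / kD)"
    and Gk1: "Gk1 = - \<i> * Q * qm * aB / kB + uy * (\<i> * aC / kC)"
    and B1: "B1 = - \<i> * L1" and B4: "B4 = - \<i> * L4"
    and A2: "A2 = kB / kC * qk + \<i> * kB / aC * z * L2"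
    and A3: "A3 = kA / kB * qm + \<i> * kA / aB * z * L3"
  shows "B1 / Q - (kC / (kB * (Q * z)) + kD * aC / (kB * aD)) * A2 + (kB / (kA * z) + kC * aB / (kA * aC)) * A3 - B4 + 1 / (Q * z) = 0"
proof -
  have "B1 / Q - (kC / (kB * (Q * z)) + kD * aC / (kB * aD)) * A2 + (kB / (kA * z) + kC * aB / (kA * aC)) * A3 - B4 + 1 / (Q * z)
      = \<i> * (- (1/Q) * L1 + - (kC / (Q * aC) + kD * z / aD) * L2 + (kB / aB + kC * z / aC) * L3 + 1 * L4)
        + (- qk / (Q * z) - kD * aC * qk / (kC * aD) + qm / z + kC * aB * qm / (kB * aC) + 1 / (Q * z))"
    unfolding B1 B4 A2 A3 using nz by (simp add: field_simps)
  also have "\<dots> = 0"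
    unfolding R Gk Gk1 qk using nz by (simp add: field_simps)
  finally show ?thesis .
qed

context setting
begin

lemma kp0: "kp 0 = 1"
proof -
  have p0: "poly (\<phi> 0) x = kp 0" for x
  proof -
    have h: "[:coeff (\<phi> 0) 0:] = \<phi> 0" using phi_deg[of 0] by (rule degree_0_id)
    have "poly (\<phi> 0) x = poly [:coeff (\<phi> 0) 0:] x" by (simp only: h)
    also have "\<dots> = coeff (\<phi> 0) 0" by simp
    finally show ?thesis using phi_deg[of 0] by simp
  qed
  have cw: "cs (\<lambda>\<zeta>. w \<zeta> / (\<i> * \<zeta>))" using wc by (intro continuous_intros) auto
  have "1 = ip (poly (\<phi> 0)) (poly (\<phi> 0))" by (simp add: orth)
  also have "\<dots> = CI (\<lambda>\<zeta>. (kp 0 * cnj (kp 0)) * (w \<zeta> / (\<i> * \<zeta>)))"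
    unfolding ip_def p0 by (rule CI_cong) simp
  also have "\<dots> = (kp 0 * cnj (kp 0)) * CI (\<lambda>\<zeta>. w \<zeta> / (\<i> * \<zeta>))" by (rule CI_lmul[OF cw])
  also have "CI (\<lambda>\<zeta>. w \<zeta> / (\<i> * \<zeta>)) = 1" using w_norm by (simp add: CI_def)
  finally have e: "kp 0 * kp 0 = 1" using kp_real[of 0] by simp
  obtain r where r: "kp 0 = of_real r" using phi_lead[of 0] by (auto elim: Reals_cases)
  have "r > 0" using phi_lead[of 0] r by simp
  moreover have "r * r = 1"
  proof -
    have "of_real (r * r) = (1::complex)" using e r by simp
    then show ?thesis by (simp only: of_real_eq_1_iff)
  qed
  moreover have "(r - 1) * (r + 1) = r * r - 1" by (simp add: algebra_simps)
  ultimately have "(r - 1) * (r + 1) = 0" by simp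
  then have "r - 1 = 0 \<or> r + 1 = 0" by simp
  then have "r = 1" using \<open>r > 0\<close> by auto
  then show ?thesis using r by simp
qed

lemma conj_SI2:
  assumes "1 \<le> j"
  shows "kp (j-1) * RR (j-1) x = kp j * RR j x - ac j * SS j x"
proof -
  have "cnj (kp (j-1) * pstar (\<phi> (j-1)) (Q * x)) = cnj (kp j * pstar (\<phi> j) (Q * x) - cnj (ac j) * poly (\<phi> j) (Q * x))"
    using SI2[OF assms, of "Q * x"] by simp
  then show ?thesis by (simp add: RR_def SS_def kp_real)
qed

lemma conj_SI1:
  assumes "1 \<le> j" "norm x = 1"
  shows "kp (j-1) * (Q / x) * SS (j-1) x = kp j * SS j x - cnj (ac j) * RR j x"
proof -
  have "cnj (kp (j-1) * ((Q * x) * poly (\<phi> (j-1)) (Q * x))) = cnj (kp j * poly (\<phi> j) (Q * x) - ac j * pstar (\<phi> j) (Q * x))"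
    using SI1[OF assms(1), of "Q * x"] by simp
  moreover have "cnj x = 1 / x" using cnj_circ[OF assms(2)] by (simp add: divide_inverse)
  ultimately show ?thesis by (simp add: RR_def SS_def kp_real mult_ac)
qed

lemma PI_step:
  assumes k: "2 \<le> k" and aC: "ac k \<noteq> 0" and aD: "ac (Suc k) \<noteq> 0" and x: "norm x = 1"
  shows "- (1/Q) * FB (Suc k) x - (kp k / (Q * ac k) + kp (Suc k) * z / ac (Suc k)) * PR k x
         + (kp (k-1) / ac (k-1) + kp k * z / ac k) * PR (k-1) x + FB (k-1) x
       = ((x - Q * z) / Q) * (kp (Suc k) / ac (Suc k) * PR k x - kp k / ac k * PR (k-1) x)"
proof -
  have k1: "1 \<le> k" using k by simp
  have x0: "x \<noteq> 0" using x by auto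
  have i: "kp k * RR k x = kp (Suc k) * RR (Suc k) x - ac (Suc k) * SS (Suc k) x"
    using conj_SI2[of "Suc k" x] by simp
  have ii: "kp k * poly (\<phi> (Suc k)) x = kp (Suc k) * (x * poly (\<phi> k) x) + ac (Suc k) * pstar (\<phi> k) x"
    using F1[of "Suc k" x] by simp
  have iii: "kp (k-1) * (x * poly (\<phi> (k-1)) x) = kp k * poly (\<phi> k) x - ac k * pstar (\<phi> k) x"
    by (rule SI1[OF k1])
  have iv: "kp (k-1) * RR (k-1) x = kp k * RR k x - ac k * SS k x"
    by (rule conj_SI2[OF k1])
  have v: "kp (k-1) * (Q / x) * SS (k-1) x = kp k * SS k x - cnj (ac k) * RR k x"
    by (rule conj_SI1[OF k1 x])
  have vi: "kp k * kp k = kp (k-1) * kp (k-1) + ac k * cnj (ac k)" by (rule K2[OF k1])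
  show ?thesis unfolding FB_def PR_def
    by (rule pw_step[OF kp_nz kp_nz kp_nz aC aD Q0 x0 i ii iii iv v vi])
qed

lemma phi1_poly: "poly (\<phi> 1) x = ac 1 + kp 1 * x"
  using phi_deg[of 1] by (simp add: poly_altdef ac_coeff)

lemma phi1_pstar: "pstar (\<phi> 1) x = cnj (ac 1) * x + kp 1"
  using phi_deg[of 1] kp_real[of 1] by (simp add: pstar_def ac_coeff)

lemma PI_base:
  assumes a1: "ac 1 \<noteq> 0" and a2: "ac 2 \<noteq> 0" and x: "norm x = 1"
  shows "- (1/Q) * FB 2 x - (1/Q) * FB 1 x - (kp 1 / (Q * ac 1) + kp 2 * z / ac 2) * PR 1 x - (1 - Q) / Q
       = ((x - Q * z) / Q) * (kp 2 / ac 2 * PR 1 x)"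
proof -
  have x0: "x \<noteq> 0" using x by auto
  have cx: "cnj x = 1 / x" using cnj_circ[OF x] by (simp add: divide_inverse)
  have i: "kp 1 * RR 1 x = kp 2 * RR 2 x - ac 2 * SS 2 x"
    using conj_SI2[of 2 x] by (simp add: numeral_2_eq_2)
  have ii: "kp 1 * poly (\<phi> 2) x = kp 2 * (x * poly (\<phi> 1) x) + ac 2 * pstar (\<phi> 1) x"
    using F1[of 2 x] by (simp add: numeral_2_eq_2)
  have P: "poly (\<phi> 1) x = ac 1 + kp 1 * x" by (rule phi1_poly)
  have PS: "pstar (\<phi> 1) x = cnj (ac 1) * x + kp 1" by (rule phi1_pstar)
  have R: "RR 1 x = ac 1 * (Q / x) + kp 1"
    unfolding RR_def phi1_pstar using kp_real[of 1] cx by simp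
  have pq: "poly (\<phi> 1) (Q * x) = ac 1 + kp 1 * (Q * x)" by (rule phi1_poly)
  have S: "SS 1 x = cnj (ac 1) + kp 1 * (Q / x)"
    unfolding SS_def pq using kp_real[of 1] cx by simp
  have vi: "kp 1 * kp 1 = 1 + ac 1 * cnj (ac 1)" using K2[of 1] kp0 by simp
  show ?thesis unfolding FB_def PR_def
    by (rule pw_base[OF kp_nz a1 a2 Q0 x0 i ii P PS R S vi])
qed

end

lemma conv1: "a * x1 + - b * x2 + c * x3 + 1 * x4 = a * x1 - b * x2 + c * x3 + (x4::complex)"
  by (simp add: algebra_simps)

lemma conv_base: "a * x1 + - b * x2 + - c * x3 + - d * 1 = a * x1 - b * x2 - c * x3 - (d::complex)"
  by (simp add: algebra_simps)

lemma conv2: "((x - y) / Q) * (d1 * X - d2 * Y) = d1 / Q * ((x - y) * X) + - (d2 / Q) * ((x - y) * (Y::complex))"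
  by (cases "Q = 0") (simp_all add: field_simps)

context setting
begin

lemma Lam_mul:
  assumes y: "y \<in> annulus q" and c: "cs F"
  shows "Lam y (\<lambda>\<zeta>. c * F \<zeta>) = c * Lam y F"
  using Lam_lin4[OF y c c c c, of c 0 0 0] by simp

lemma cs_yPR: "cs (\<lambda>\<zeta>. (\<zeta> - y) * PR k \<zeta>)"
  using cs_PR[of k] by (intro continuous_intros) auto

lemma cs_one: "cs (\<lambda>_. 1)" by (intro continuous_intros)

lemma Lstep:
  assumes y: "Q * z \<in> annulus q" and k: "2 \<le> k" and aC: "ac k \<noteq> 0" and aD: "ac (Suc k) \<noteq> 0"
  shows "- (1/Q) * Lam (Q*z) (FB (Suc k)) + - (kp k / (Q * ac k) + kp (Suc k) * z / ac (Suc k)) * Lam (Q*z) (PR k)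
       + (kp (k-1) / ac (k-1) + kp k * z / ac k) * Lam (Q*z) (PR (k-1)) + 1 * Lam (Q*z) (FB (k-1))
     = kp (Suc k) / ac (Suc k) / Q * Lam (Q*z) (\<lambda>\<zeta>. (\<zeta> - Q*z) * PR k \<zeta>)
       + - (kp k / ac k / Q) * Lam (Q*z) (\<lambda>\<zeta>. (\<zeta> - Q*z) * PR (k-1) \<zeta>)"
proof -
  have "- (1/Q) * Lam (Q*z) (FB (Suc k)) + - (kp k / (Q * ac k) + kp (Suc k) * z / ac (Suc k)) * Lam (Q*z) (PR k)
       + (kp (k-1) / ac (k-1) + kp k * z / ac k) * Lam (Q*z) (PR (k-1)) + 1 * Lam (Q*z) (FB (k-1))
      = Lam (Q*z) (\<lambda>\<zeta>. - (1/Q) * FB (Suc k) \<zeta> + - (kp k / (Q * ac k) + kp (Suc k) * z / ac (Suc k)) * PR k \<zeta>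
       + (kp (k-1) / ac (k-1) + kp k * z / ac k) * PR (k-1) \<zeta> + 1 * FB (k-1) \<zeta>)"
    by (rule Lam_lin4[OF y cs_FB cs_PR cs_PR cs_FB, symmetric])
  also have "\<dots> = Lam (Q*z) (\<lambda>\<zeta>. kp (Suc k) / ac (Suc k) / Q * ((\<zeta> - Q*z) * PR k \<zeta>)
       + - (kp k / ac k / Q) * ((\<zeta> - Q*z) * PR (k-1) \<zeta>))"
  proof (rule Lam_cong)
    fix \<zeta> :: complex assume x: "norm \<zeta> = 1"
    have "- (1/Q) * FB (Suc k) \<zeta> + - (kp k / (Q * ac k) + kp (Suc k) * z / ac (Suc k)) * PR k \<zeta>
       + (kp (k-1) / ac (k-1) + kp k * z / ac k) * PR (k-1) \<zeta> + 1 * FB (k-1) \<zeta>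
       = - (1/Q) * FB (Suc k) \<zeta> - (kp k / (Q * ac k) + kp (Suc k) * z / ac (Suc k)) * PR k \<zeta>
         + (kp (k-1) / ac (k-1) + kp k * z / ac k) * PR (k-1) \<zeta> + FB (k-1) \<zeta>"
      by (rule conv1)
    also have "\<dots> = ((\<zeta> - Q * z) / Q) * (kp (Suc k) / ac (Suc k) * PR k \<zeta> - kp k / ac k * PR (k-1) \<zeta>)"
      by (rule PI_step[OF k aC aD x])
    also have "\<dots> = kp (Suc k) / ac (Suc k) / Q * ((\<zeta> - Q*z) * PR k \<zeta>) + - (kp k / ac k / Q) * ((\<zeta> - Q*z) * PR (k-1) \<zeta>)"
      by (rule conv2)
    finally show "- (1/Q) * FB (Suc k) \<zeta> + - (kp k / (Q * ac k) + kp (Suc k) * z / ac (Suc k)) * PR k \<zeta>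
       + (kp (k-1) / ac (k-1) + kp k * z / ac k) * PR (k-1) \<zeta> + 1 * FB (k-1) \<zeta>
       = kp (Suc k) / ac (Suc k) / Q * ((\<zeta> - Q*z) * PR k \<zeta>) + - (kp k / ac k / Q) * ((\<zeta> - Q*z) * PR (k-1) \<zeta>)" .
  qed
  also have "\<dots> = kp (Suc k) / ac (Suc k) / Q * Lam (Q*z) (\<lambda>\<zeta>. (\<zeta> - Q*z) * PR k \<zeta>)
       + - (kp k / ac k / Q) * Lam (Q*z) (\<lambda>\<zeta>. (\<zeta> - Q*z) * PR (k-1) \<zeta>)"
    by (rule Lam_lin2[OF y cs_yPR cs_yPR])
  finally show ?thesis .
qed

lemma Lbase:
  assumes y: "Q * z \<in> annulus q" and a1: "ac 1 \<noteq> 0" and a2: "ac 2 \<noteq> 0"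
  shows "- (1/Q) * Lam (Q*z) (FB 2) + - (1/Q) * Lam (Q*z) (FB 1) + - (kp 1 / (Q * ac 1) + kp 2 * z / ac 2) * Lam (Q*z) (PR 1)
         + - ((1 - Q) / Q) * Lam (Q*z) (\<lambda>_. 1)
       = 1 / Q * (kp 2 / ac 2 * Lam (Q*z) (\<lambda>\<zeta>. (\<zeta> - Q*z) * PR 1 \<zeta>))"
proof -
  have "- (1/Q) * Lam (Q*z) (FB 2) + - (1/Q) * Lam (Q*z) (FB 1) + - (kp 1 / (Q * ac 1) + kp 2 * z / ac 2) * Lam (Q*z) (PR 1)
         + - ((1 - Q) / Q) * Lam (Q*z) (\<lambda>_. 1)
      = Lam (Q*z) (\<lambda>\<zeta>. - (1/Q) * FB 2 \<zeta> + - (1/Q) * FB 1 \<zeta> + - (kp 1 / (Q * ac 1) + kp 2 * z / ac 2) * PR 1 \<zeta>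
         + - ((1 - Q) / Q) * 1)"
    by (rule Lam_lin4[OF y cs_FB cs_FB cs_PR cs_one, symmetric])
  also have "\<dots> = Lam (Q*z) (\<lambda>\<zeta>. 1 / Q * (kp 2 / ac 2 * ((\<zeta> - Q*z) * PR 1 \<zeta>)))"
  proof (rule Lam_cong)
    fix \<zeta> :: complex assume x: "norm \<zeta> = 1"
    have "- (1/Q) * FB 2 \<zeta> + - (1/Q) * FB 1 \<zeta> + - (kp 1 / (Q * ac 1) + kp 2 * z / ac 2) * PR 1 \<zeta> + - ((1 - Q) / Q) * 1
        = - (1/Q) * FB 2 \<zeta> - (1/Q) * FB 1 \<zeta> - (kp 1 / (Q * ac 1) + kp 2 * z / ac 2) * PR 1 \<zeta> - (1 - Q) / Q"
      by (rule conv_base)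
    also have "\<dots> = ((\<zeta> - Q * z) / Q) * (kp 2 / ac 2 * PR 1 \<zeta>)"
      by (rule PI_base[OF a1 a2 x])
    also have "\<dots> = 1 / Q * (kp 2 / ac 2 * ((\<zeta> - Q*z) * PR 1 \<zeta>))"
      by (simp add: field_simps)
    finally show "- (1/Q) * FB 2 \<zeta> + - (1/Q) * FB 1 \<zeta> + - (kp 1 / (Q * ac 1) + kp 2 * z / ac 2) * PR 1 \<zeta> + - ((1 - Q) / Q) * 1
        = 1 / Q * (kp 2 / ac 2 * ((\<zeta> - Q*z) * PR 1 \<zeta>))" .
  qed
  also have "\<dots> = 1 / Q * Lam (Q*z) (\<lambda>\<zeta>. kp 2 / ac 2 * ((\<zeta> - Q*z) * PR 1 \<zeta>))"
    by (rule Lam_mul[OF y]) (intro continuous_intros cs_yPR)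
  also have "Lam (Q*z) (\<lambda>\<zeta>. kp 2 / ac 2 * ((\<zeta> - Q*z) * PR 1 \<zeta>)) = kp 2 / ac 2 * Lam (Q*z) (\<lambda>\<zeta>. (\<zeta> - Q*z) * PR 1 \<zeta>)"
    by (rule Lam_mul[OF y cs_yPR])
  finally show ?thesis .
qed

lemma qn_rec: "1 \<le> k \<Longrightarrow> qn k = 1 + Q * qn (k-1)"
proof -
  assume "1 \<le> k"
  then obtain m where m: "k = Suc m" by (cases k) auto
  show ?thesis unfolding m qn_def using Q1 by (simp add: field_simps)
qed

lemma qn1: "qn 1 = 1" using Q1 by (simp add: qn_def)

lemma kap_eq: "kap \<phi> = (\<lambda>k. kp k)" by (rule ext) (simp add: kap_def)

lemma main:
  assumes n: "2 \<le> n" and phi0: "\<And>k. 1 \<le> k \<Longrightarrow> k \<le> n \<Longrightarrow> ac k \<noteq> 0"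
    and y: "Q * z \<in> annulus q"
  shows "LHSf (\<lambda>k. coefA q w u \<phi> k z) (\<lambda>k. coefB q w u \<phi> k z) (kap \<phi>) (\<lambda>k. poly (\<phi> k) 0) z n
       = RHSf (\<lambda>k. coefA q w u \<phi> k z) (\<lambda>k. coefB q w u \<phi> k z) (kap \<phi>) (coefM1 q w u z) (u (Q * z)) Q z n"
proof (rule frame[OF Q0 _ _ _ _ n order.refl])
  show z0: "z \<noteq> 0" using y q by (auto simp: annulus_def)
  show "\<And>k. kap \<phi> k \<noteq> 0" by (simp only: kap_eq) (rule kp_nz)
  have a1: "ac 1 \<noteq> 0" and a2: "ac 2 \<noteq> 0" using phi0 n by auto
  show "LHSf (\<lambda>k. coefA q w u \<phi> k z) (\<lambda>k. coefB q w u \<phi> k z) (kap \<phi>) (\<lambda>k. poly (\<phi> k) 0) z 2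
       = RHSf (\<lambda>k. coefA q w u \<phi> k z) (\<lambda>k. coefB q w u \<phi> k z) (kap \<phi>) (coefM1 q w u z) (u (Q * z)) Q z 2"
  proof (rule base_alg)
    show "Q \<noteq> 0" by (rule Q0)
    show "z \<noteq> 0" by (rule z0)
    show "kap \<phi> 1 \<noteq> 0" "kap \<phi> 2 \<noteq> 0" by (simp only: kap_eq, rule kp_nz)+
    show "poly (\<phi> 1) 0 \<noteq> 0" "poly (\<phi> 2) 0 \<noteq> 0" by (rule a1, rule a2)
    show "kap \<phi> 0 = 1" by (simp add: kap_eq kp0)
    show "coefB q w u \<phi> 2 z = - \<i> * Lam (Q*z) (FB 2)" by (rule repB)
    show "coefB q w u \<phi> 1 z = - \<i> * Lam (Q*z) (FB 1)" by (rule repB)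
    show "coefA q w u \<phi> 1 z = kap \<phi> 0 / kap \<phi> 1 * 1 + \<i> * kap \<phi> 0 / poly (\<phi> 1) 0 * z * Lam (Q*z) (PR 1)"
      using repA[of 1 z] unfolding qn1 kap_eq by simp
    show "coefM1 q w u z = - \<i> * Lam (Q*z) (\<lambda>_. 1)" by (rule repM[OF y])
    show "- (1/Q) * Lam (Q*z) (FB 2) + - (1/Q) * Lam (Q*z) (FB 1) + - (kap \<phi> 1 / (Q * poly (\<phi> 1) 0) + kap \<phi> 2 * z / poly (\<phi> 2) 0) * Lam (Q*z) (PR 1)
         + - ((1 - Q) / Q) * Lam (Q*z) (\<lambda>_. 1)
       = 1 / Q * (kap \<phi> 2 / poly (\<phi> 2) 0 * Lam (Q*z) (\<lambda>\<zeta>. (\<zeta> - Q*z) * PR 1 \<zeta>))"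
      using Lbase[OF y a1 a2] by (simp only: kap_eq)
    show "Lam (Q*z) (\<lambda>\<zeta>. (\<zeta> - Q*z) * PR 1 \<zeta>) = - \<i> * Q * 1 * poly (\<phi> 1) 0 / kap \<phi> 1 + u (Q * z) * (\<i> * poly (\<phi> 2) 0 / kap \<phi> 2)"
      using KL[OF y, of 1] unfolding qn1 kap_eq by (simp add: numeral_2_eq_2)
  qed
next
  fix k assume k: "2 \<le> k" "k < n"
  have aB: "ac (k-1) \<noteq> 0" and aC: "ac k \<noteq> 0" and aD: "ac (Suc k) \<noteq> 0" using phi0 k by auto
  have z0: "z \<noteq> 0" using y q by (auto simp: annulus_def)
  have k1: "1 \<le> k" using k by simp
  show "coefB q w u \<phi> (Suc k) z / Q - (kap \<phi> k / (kap \<phi> (k-1) * (Q * z)) + kap \<phi> (Suc k) * poly (\<phi> k) 0 / (kap \<phi> (k-1) * poly (\<phi> (Suc k)) 0)) * coefA q w u \<phi> k z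
       + (kap \<phi> (k-1) / (kap \<phi> (k-2) * z) + kap \<phi> k * poly (\<phi> (k-1)) 0 / (kap \<phi> (k-2) * poly (\<phi> k) 0)) * coefA q w u \<phi> (k-1) z
       - coefB q w u \<phi> (k-1) z + 1 / (Q * z) = 0"
    unfolding kap_eq
  proof (rule step_alg2[OF kp_nz kp_nz kp_nz kp_nz aB aC aD Q0 z0 qn_rec[OF k1]])
    show "- (1/Q) * Lam (Q*z) (FB (Suc k)) + - (kp k / (Q * ac k) + kp (Suc k) * z / ac (Suc k)) * Lam (Q*z) (PR k)
       + (kp (k-1) / ac (k-1) + kp k * z / ac k) * Lam (Q*z) (PR (k-1)) + 1 * Lam (Q*z) (FB (k-1))
     = kp (Suc k) / ac (Suc k) / Q * Lam (Q*z) (\<lambda>\<zeta>. (\<zeta> - Q*z) * PR k \<zeta>)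
       + - (kp k / ac k / Q) * Lam (Q*z) (\<lambda>\<zeta>. (\<zeta> - Q*z) * PR (k-1) \<zeta>)"
      by (rule Lstep[OF y k(1) aC aD])
    show "Lam (Q*z) (\<lambda>\<zeta>. (\<zeta> - Q*z) * PR k \<zeta>) = - \<i> * Q * qn k * ac k / kp k + u (Q*z) * (\<i> * ac (Suc k) / kp (Suc k))"
      by (rule KL[OF y])
    show "Lam (Q*z) (\<lambda>\<zeta>. (\<zeta> - Q*z) * PR (k-1) \<zeta>) = - \<i> * Q * qn (k-1) * ac (k-1) / kp (k-1) + u (Q*z) * (\<i> * ac k / kp k)"
      using KL[OF y, of "k-1"] k1 by simp
    show "coefB q w u \<phi> (Suc k) z = - \<i> * Lam (Q*z) (FB (Suc k))" by (rule repB)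
    show "coefB q w u \<phi> (k-1) z = - \<i> * Lam (Q*z) (FB (k-1))" by (rule repB)
    show "coefA q w u \<phi> k z = kp (k-1) / kp k * qn k + \<i> * kp (k-1) / ac k * z * Lam (Q*z) (PR k)"
      by (rule repA)
    show "coefA q w u \<phi> (k-1) z = kp (k-2) / kp (k-1) * qn (k-1) + \<i> * kp (k-2) / ac (k-1) * z * Lam (Q*z) (PR (k-1))"
      using repA[of "k-1" z] by (simp add: numeral_2_eq_2)
  qed
qed

end

theorem theorem4p2:
  fixes q :: real and w u :: "complex \<Rightarrow> complex" and \<phi> :: "nat \<Rightarrow> complex poly"
    and n :: nat and z :: complex
  assumes q: "0 < q" "q < 1"
    and w_pos: "\<And>\<zeta>. norm \<zeta> = 1 \<Longrightarrow> w \<zeta> \<in> \<real> \<and> 0 < Re (w \<zeta>)"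
    and w_hol: "w holomorphic_on annulus q"
    and w_cont: "continuous_on (cannulus q) w"
    and w_norm: "contour_integral (circlepath 0 1) (\<lambda>\<zeta>. w \<zeta> / (\<i> * \<zeta>)) = 1"
    and phi_deg: "\<And>m. degree (\<phi> m) = m"
    and phi_lead: "\<And>m. lead_coeff (\<phi> m) \<in> \<real> \<and> 0 < Re (lead_coeff (\<phi> m))"
    and phi_orth: "\<And>m k. contour_integral (circlepath 0 1)
                      (\<lambda>\<zeta>. poly (\<phi> m) \<zeta> * cnj (poly (\<phi> k) \<zeta>) * w \<zeta> / (\<i> * \<zeta>))
                    = (if m = k then 1 else 0)"
    and u_def: "\<And>x. norm x = 1 \<Longrightarrow> Dq q w x = - u (of_real q * x) * w (of_real q * x)"
    and u_hol: "u holomorphic_on annulus q"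
    and u_cont: "continuous_on (cannulus q) u"
    and n: "2 \<le> n"
    and phi0: "\<And>k. 1 \<le> k \<Longrightarrow> k \<le> n \<Longrightarrow> poly (\<phi> k) 0 \<noteq> 0"
    and z: "of_real q * z \<in> annulus q"
  shows "coefB q w u \<phi> n z + coefB q w u \<phi> (n - 1) z
           - kap \<phi> (n - 1) / kap \<phi> (n - 2) * coefA q w u \<phi> (n - 1) z / z
           - kap \<phi> n / kap \<phi> (n - 2) * (poly (\<phi> (n - 1)) 0 / poly (\<phi> n) 0)
               * coefA q w u \<phi> (n - 1) z
         = - of_nat (n - 1) / (of_real q * z) - u (of_real q * z) / of_real q
           - (1 - of_real q) / of_real q *
             ((coefB q w u \<phi> 1 z + coefM1 q w u z)
              + (\<Sum>j = 1..n - 1. coefB q w u \<phi> (j + 1) z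
                   - kap \<phi> j / kap \<phi> (j - 1) * coefA q w u \<phi> j z / z))"
proof -
  interpret S: setting q w u \<phi>
    by (rule setting.intro[OF q(1) q(2) w_pos w_hol w_cont w_norm phi_deg phi_lead phi_orth u_def u_hol u_cont])
  have "LHSf (\<lambda>k. coefA q w u \<phi> k z) (\<lambda>k. coefB q w u \<phi> k z) (kap \<phi>) (\<lambda>k. poly (\<phi> k) 0) z n
       = RHSf (\<lambda>k. coefA q w u \<phi> k z) (\<lambda>k. coefB q w u \<phi> k z) (kap \<phi>) (coefM1 q w u z) (u (of_real q * z)) (of_real q) z n"
    by (rule S.main[OF n phi0 z])
  then show ?thesis by (simp only: LHSf_def RHSf_def)
qed

end
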